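(* Suppose $w$ satisfies Assumption 1, $\gamma\in\mathbb R$. Consider the ODE $$Y'(t)=-\theta^2\Big[1+\frac{h'(-\gamma\sqrt{Y(t)})}{h(-\gamma\sqrt{Y(t)})\sqrt{Y(t)}}\Big]^{-2},\ t\in[0,T),\qquad Y(T)=0,\qquad(\mathrm A)$$ where a positive solution is a function satisfying (A) with $Y>0$ on $[0,T)$. (i) If (A) admits a positive solution, then $\boldsymbol\mu\ne\boldsymbol0$ and $h'(0)=0$. (ii) If $\boldsymbol\mu\neq\boldsymbol0$, $h'(0)=0$ and $\mathcal G(y_1)>\theta^2T$, then $Y(t)=\mathcal G^{-1}(\theta^2(T-t))$, $t\in[0,T]$, is the unique positive solution of (A), and $1+\frac{h'(-\gamma\sqrt{Y(t)})}{h(-\gamma\sqrt{Y(t)})\sqrt{Y(t)}}>0$ for all $t\in[0,T)$.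
   Context: Constants: $\boldsymbol\mu\in\mathbb R^n$, $\boldsymbol\sigma\in\mathbb R^{n\times d}$ with $\boldsymbol\sigma\boldsymbol\sigma^\top$ positive definite, $\theta=\sqrt{\boldsymbol\mu^\top(\boldsymbol\sigma\boldsymbol\sigma^\top)^{-1}\boldsymbol\mu}$, $T>0$. Assumption 1 on $w:[0,1]\to[0,1]$: strictly increasing, $C^1$, $w(0)=0,w(1)=1$, $w'(p)\le c[p^\alpha+(1-p)^\alpha]$ on $(0,1)$ for some $c>0,\alpha\in(-1,0)$. $\bar w(p)=1-w(1-p)$. $h(x)=\int_0^1e^{-x\Phi^{-1}(p)}d\bar w(p)$, $x\in\mathbb R$ ($\Phi$ standard normal distribution function); $h$ is smooth, positive, with $h(0)=1$. When $h'(0)=0$: $\mathcal G(y)=\int_0^y\big[1+\frac{h'(-\gamma\sqrt z)}{h(-\gamma\sqrt z)\sqrt z}\big]^2dz$, $y\in[0,\infty]$; $y_1=\inf\{y>0:1+\frac{h'(-\gamma\sqrt y)}{h(-\gamma\sqrt y)\sqrt y}\le0\}$ ($\inf\emptyset=\infty$); when $y_1>0$, $\mathcal G$ is strictly increasing on $[0,y_1]$ with inverse $\mathcal G^{-1}:[0,\mathcal G(y_1)]\to[0,y_1]$. *)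

theory Defs
  imports "HOL-Probability.Probability"
begin

definition assumption1 :: "(real \<Rightarrow> real) \<Rightarrow> bool" where
  "assumption1 w \<longleftrightarrow>
     strict_mono_on {0..1} w \<and> w ` {0..1} \<subseteq> {0..1} \<and>
     continuous_on {0..1} w \<and>
     (\<forall>p\<in>{0<..<1}. w differentiable (at p)) \<and> continuous_on {0<..<1} (deriv w) \<and>
     w 0 = 0 \<and> w 1 = 1 \<and>
     (\<exists>c>0. \<exists>\<alpha>. -1 < \<alpha> \<and> \<alpha> < 0 \<and>
        (\<forall>p\<in>{0<..<1}. deriv w p \<le> c * (p powr \<alpha> + (1 - p) powr \<alpha>)))"

text \<open>Dual weighting w-bar(p) = 1 - w(1-p), extended constantly outside [0,1]
  (value 0 left of 0, value 1 right of 1) so that it is a distribution function on the reals.\<close>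
definition wbar :: "(real \<Rightarrow> real) \<Rightarrow> real \<Rightarrow> real" where
  "wbar w p = 1 - w (1 - max 0 (min 1 p))"

definition Phi :: "real \<Rightarrow> real" where
  "Phi x = set_lebesgue_integral lborel {..x} std_normal_density"

definition Phi_inv :: "real \<Rightarrow> real" where
  "Phi_inv p = (THE x. Phi x = p)"

definition hfun :: "(real \<Rightarrow> real) \<Rightarrow> real \<Rightarrow> real" where
  "hfun w x = set_lebesgue_integral (interval_measure (wbar w)) {0<..<1}
                 (\<lambda>p. exp (- x * Phi_inv p))"

definition bracket :: "(real \<Rightarrow> real) \<Rightarrow> real \<Rightarrow> real \<Rightarrow> real" where
  "bracket w \<gamma> y = 1 + deriv (hfun w) (- \<gamma> * sqrt y) / (hfun w (- \<gamma> * sqrt y) * sqrt y)"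

definition Gfun :: "(real \<Rightarrow> real) \<Rightarrow> real \<Rightarrow> ereal \<Rightarrow> ennreal" where
  "Gfun w \<gamma> y = (\<integral>\<^sup>+ z. indicator {z. 0 \<le> z \<and> ereal z \<le> y} z * ennreal ((bracket w \<gamma> z)\<^sup>2) \<partial>lborel)"

text \<open>y1 = inf{y>0 : bracket(y) \<le> 0}, with inf of the empty set = infinity.\<close>
definition y1 :: "(real \<Rightarrow> real) \<Rightarrow> real \<Rightarrow> ereal" where
  "y1 w \<gamma> = Inf (ereal ` {y. 0 < y \<and> bracket w \<gamma> y \<le> 0})"

definition Ginv :: "(real \<Rightarrow> real) \<Rightarrow> real \<Rightarrow> real \<Rightarrow> real" where
  "Ginv w \<gamma> x = (THE y. 0 \<le> y \<and> ereal y \<le> y1 w \<gamma> \<and> Gfun w \<gamma> (ereal y) = ennreal x)"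

definition pos_def_mat :: "real^'n^'n \<Rightarrow> bool" where
  "pos_def_mat A \<longleftrightarrow> (\<forall>x. x \<noteq> 0 \<longrightarrow> x \<bullet> (A *v x) > 0)"

definition theta :: "real^'n \<Rightarrow> real^'d^'n \<Rightarrow> real" where
  "theta \<mu> \<sigma> = sqrt (\<mu> \<bullet> (matrix_inv (\<sigma> ** transpose \<sigma>) *v \<mu>))"

definition pos_sol :: "(real \<Rightarrow> real) \<Rightarrow> real \<Rightarrow> real \<Rightarrow> real \<Rightarrow> (real \<Rightarrow> real) \<Rightarrow> bool" where
  "pos_sol w \<gamma> \<theta> T Y \<longleftrightarrow>
     continuous_on {0..T} Y \<and> Y T = 0 \<and>
     (\<forall>t\<in>{0..<T}. Y t > 0 \<and> bracket w \<gamma> (Y t) \<noteq> 0 \<and>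
        (Y has_real_derivative (- \<theta>\<^sup>2 * (bracket w \<gamma> (Y t)) powi (-2))) (at t within {0..T}))"

end

theory Submission
  imports Defs
begin


abbreviation "ND \<equiv> density lborel std_normal_density"

lemma ND_rd: "real_distribution ND"
  unfolding real_distribution_def real_distribution_axioms_def
  using prob_space_normal_density by auto

lemma Phi_cdf: "Phi x = cdf ND x"
proof -
  have i: "integrable lborel (\<lambda>t. std_normal_density t * indicator {..x} t)"
    using integrable_mult_indicator[of "{..x}" lborel std_normal_density] by (simp add: mult.commute)
  have "emeasure ND {..x} = (\<integral>\<^sup>+t. ennreal (std_normal_density t * indicator {..x} t) \<partial>lborel)"
    by (subst emeasure_density) (auto intro!: nn_integral_cong split: split_indicator)
  also have "\<dots> = ennreal (\<integral>t. std_normal_density t * indicator {..x} t \<partial>lborel)"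
    by (auto intro!: nn_integral_eq_integral i)
  finally have "emeasure ND {..x} = ennreal (\<integral>t. std_normal_density t * indicator {..x} t \<partial>lborel)" .
  then have "measure ND {..x} = (\<integral>t. std_normal_density t * indicator {..x} t \<partial>lborel)"
    by (simp add: measure_def)
  then show ?thesis unfolding Phi_def cdf_def set_lebesgue_integral_def
    by (simp add: mult.commute)
qed

lemma Phi_strict: assumes "x < y" shows "Phi x < Phi y"
proof -
  interpret real_distribution ND by (rule ND_rd)
  define c where "c = (1 / sqrt (2 * pi)) * exp (- (\<bar>x\<bar>+\<bar>y\<bar>)\<^sup>2 / 2)"
  have cpos: "c > 0" unfolding c_def by simp
  have low: "c * indicator {x<..y} t \<le> std_normal_density t * indicator {x<..y} t" for t
  proof (cases "t \<in> {x<..y}")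
    case True
    then have "\<bar>t\<bar> \<le> \<bar>x\<bar>+\<bar>y\<bar>" by auto
    then have "t\<^sup>2 \<le> (\<bar>x\<bar>+\<bar>y\<bar>)\<^sup>2"
      using abs_le_square_iff[of t "\<bar>x\<bar>+\<bar>y\<bar>"] by simp
    then have "exp (- (\<bar>x\<bar>+\<bar>y\<bar>)\<^sup>2 / 2) \<le> exp (- t\<^sup>2 / 2)" by simp
    then show ?thesis using True unfolding c_def std_normal_density_def
      by (simp add: indicator_def divide_right_mono)
  qed (auto simp: indicator_def)
  have "Phi y - Phi x = measure ND {x<..y}"
    using cdf_diff_eq[OF assms] by (simp add: Phi_cdf)
  have e: "emeasure ND {x<..y} = (\<integral>\<^sup>+t. ennreal (std_normal_density t * indicator {x<..y} t) \<partial>lborel)"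
    by (subst emeasure_density) (auto intro!: nn_integral_cong split: split_indicator)
  have "(\<integral>\<^sup>+t. ennreal (c * indicator {x<..y} t) \<partial>lborel) \<le> (\<integral>\<^sup>+t. ennreal (std_normal_density t * indicator {x<..y} t) \<partial>lborel)"
    using low by (intro nn_integral_mono) (auto intro!: ennreal_leI)
  moreover have "(\<integral>\<^sup>+t. ennreal (c * indicator {x<..y} t) \<partial>lborel) = ennreal (c * (y - x))"
  proof -
    have "(\<integral>\<^sup>+t. ennreal (c * indicator {x<..y} t) \<partial>lborel) = (\<integral>\<^sup>+t. ennreal c * indicator {x<..y} t \<partial>lborel)"
      by (intro nn_integral_cong) (simp add: indicator_def)
    also have "\<dots> = ennreal c * emeasure lborel {x<..y}"
      by (rule nn_integral_cmult_indicator) simp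
    also have "\<dots> = ennreal (c * (y - x))" using assms cpos by (simp add: ennreal_mult)
    finally show ?thesis .
  qed
  ultimately have "ennreal (c * (y-x)) \<le> emeasure ND {x<..y}" using e by simp
  then have "c * (y-x) \<le> measure ND {x<..y}"
    by (simp add: emeasure_eq_measure)
  moreover have "c * (y - x) > 0" using cpos assms by simp
  ultimately show ?thesis using \<open>Phi y - Phi x = measure ND {x<..y}\<close> by simp
qed

lemma Phi_cont: "isCont Phi x"
proof -
  interpret real_distribution ND by (rule ND_rd)
  have "emeasure ND {x} = (\<integral>\<^sup>+t. ennreal (std_normal_density t) * indicator {x} t \<partial>lborel)"
    by (subst emeasure_density) auto
  also have "\<dots> = (\<integral>\<^sup>+(t::real). 0 \<partial>lborel)"
  proof (rule nn_integral_cong_AE)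
    show "AE t in lborel. ennreal (std_normal_density t) * indicator {x} t = 0"
      using AE_lborel_singleton[of x] by eventually_elim simp
  qed
  finally have "measure ND {x} = 0" by (simp add: measure_def)
  then have "isCont (cdf ND) x" using isCont_cdf by simp
  moreover have "Phi = cdf ND" using Phi_cdf by auto
  ultimately show ?thesis by simp
qed

lemma Phi_bot: "(Phi \<longlongrightarrow> 0) at_bot"
proof -
  interpret real_distribution ND by (rule ND_rd)
  have "Phi = cdf ND" using Phi_cdf by auto
  then show ?thesis using cdf_lim_at_bot by simp
qed

lemma Phi_top: "(Phi \<longlongrightarrow> 1) at_top"
proof -
  interpret real_distribution ND by (rule ND_rd)
  have "Phi = cdf ND" using Phi_cdf by auto
  then show ?thesis using cdf_lim_at_top_prob by simp
qed

lemma Phi_mono: "x \<le> y \<Longrightarrow> Phi x \<le> Phi y"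
  using Phi_strict[of x y] by (cases "x = y") auto

lemma Phi_inj: "Phi x = Phi y \<Longrightarrow> x = y"
  using Phi_strict[of x y] Phi_strict[of y x] by (cases x y rule: linorder_cases) auto

lemma Phi_range: "0 < Phi x \<and> Phi x < 1"
proof -
  interpret real_distribution ND by (rule ND_rd)
  have "Phi (x - 1) < Phi x" "Phi x < Phi (x+1)" using Phi_strict by auto
  moreover have "Phi (x - 1) \<ge> 0" "Phi (x+1) \<le> 1"
    using Phi_cdf cdf_nonneg cdf_bounded_prob by auto
  ultimately show ?thesis by linarith
qed

lemma Phi_surj: assumes "0 < p" "p < 1" shows "\<exists>x. Phi x = p"
proof -
  have "eventually (\<lambda>x. Phi x < p) at_bot" using Phi_bot assms(1) by (rule order_tendstoD)
  then obtain a where a: "Phi a < p" by (auto simp: eventually_at_bot_linorder)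
  have "eventually (\<lambda>x. Phi x > p) at_top" using Phi_top assms(2) by (rule order_tendstoD)
  then obtain b where b: "Phi b > p" by (auto simp: eventually_at_top_linorder)
  have "a \<le> b" using a b Phi_mono[of b a] by (cases "a \<le> b") auto
  from IVT[of Phi a p b] a b this Phi_cont show ?thesis by auto
qed

lemma Phi_inv: assumes "0 < p" "p < 1" shows "Phi (Phi_inv p) = p"
proof -
  obtain x where "Phi x = p" using Phi_surj assms by auto
  then have "Phi_inv p = x" unfolding Phi_inv_def using Phi_inj by (intro the_equality) auto
  then show ?thesis using \<open>Phi x = p\<close> by simp
qed

lemma Phi_inv_Phi: "Phi_inv (Phi x) = x"
  using Phi_inv[of "Phi x"] Phi_range[of x] Phi_inj by auto

lemma Phi_inv_le_iff: assumes "0 < p" "p < 1" shows "Phi_inv p \<le> t \<longleftrightarrow> p \<le> Phi t"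
proof
  assume "Phi_inv p \<le> t" then show "p \<le> Phi t" using Phi_mono Phi_inv[OF assms] by metis
next
  assume "p \<le> Phi t"
  then have "Phi (Phi_inv p) \<le> Phi t" using Phi_inv[OF assms] by simp
  then show "Phi_inv p \<le> t" using Phi_strict[of t "Phi_inv p"] by (cases "Phi_inv p \<le> t") auto
qed


lemma exp_normal: "exp (c*t) * std_normal_density t = exp (c\<^sup>2/2) * normal_density c 1 t"
proof -
  have "c*t + - t\<^sup>2/2 = c\<^sup>2/2 + -(t-c)\<^sup>2/2" by (simp add: power2_eq_square field_simps)
  then have "exp (c*t) * exp (- t\<^sup>2/2) = exp (c\<^sup>2/2) * exp (-(t-c)\<^sup>2/2)"
    by (metis exp_add)
  then show ?thesis unfolding normal_density_def by simp
qed

lemma integrable_exp_normal: "integrable lborel (\<lambda>t. exp (c*t) * std_normal_density t)"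
  unfolding exp_normal by (intro integrable_mult_right) simp

lemma integral_exp_normal: "(\<integral>t. exp (c*t) * std_normal_density t \<partial>lborel) = exp (c\<^sup>2/2)"
  unfolding exp_normal by simp

lemma Phi_eq: "Phi x = (\<integral>t. indicator {..x} t * std_normal_density t \<partial>lborel)"
  unfolding Phi_def set_lebesgue_integral_def by simp

lemma Phi_int: "integrable lborel (\<lambda>t. indicator {..x} t * std_normal_density t)"
  using integrable_mult_indicator[of "{..x}" lborel std_normal_density] by simp

lemma Phi_le: assumes "b \<ge> 0" shows "Phi x \<le> exp (b*x + b\<^sup>2/2)"
proof -
  have "Phi x \<le> (\<integral>t. exp (b*x) * (exp ((-b)*t) * std_normal_density t) \<partial>lborel)"
    unfolding Phi_eq
  proof (rule integral_mono)
    show "integrable lborel (\<lambda>t. exp (b*x) * (exp ((-b)*t) * std_normal_density t))"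
      by (intro integrable_mult_right integrable_exp_normal)
    fix t
    show "indicator {..x} t * std_normal_density t \<le> exp (b*x) * (exp ((-b)*t) * std_normal_density t)"
    proof (cases "t \<le> x")
      case True
      then have "1 \<le> exp (b*x) * exp ((-b)*t)" using assms
        by (simp add: mult_left_mono flip: exp_add)
      then have "1 * std_normal_density t \<le> exp (b*x) * exp ((-b)*t) * std_normal_density t"
        by (intro mult_right_mono) auto
      then show ?thesis using True by (simp add: mult.assoc)
    qed auto
  qed (rule Phi_int)
  also have "\<dots> = exp (b*x) * exp (b\<^sup>2/2)"
    using integral_exp_normal[of "-b"] by simp
  also have "\<dots> = exp (b*x + b\<^sup>2/2)" by (simp add: exp_add)
  finally show ?thesis .
qed

lemma Phi_ge: assumes "b \<ge> 0" shows "1 - Phi x \<le> exp (-b*x + b\<^sup>2/2)"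
proof -
  have "1 - Phi x = (\<integral>t. std_normal_density t - indicator {..x} t * std_normal_density t \<partial>lborel)"
    unfolding Phi_eq by (subst Bochner_Integration.integral_diff) (auto intro: Phi_int)
  also have "\<dots> \<le> (\<integral>t. exp (-b*x) * (exp (b*t) * std_normal_density t) \<partial>lborel)"
  proof (rule integral_mono)
    show "integrable lborel (\<lambda>t. exp (-b*x) * (exp (b*t) * std_normal_density t))"
      by (intro integrable_mult_right integrable_exp_normal)
    show "integrable lborel (\<lambda>t. std_normal_density t - indicator {..x} t * std_normal_density t)"
      by (intro Bochner_Integration.integrable_diff Phi_int) auto
    fix t
    show "std_normal_density t - indicator {..x} t * std_normal_density t \<le> exp (-b*x) * (exp (b*t) * std_normal_density t)"
    proof (cases "t \<le> x")
      case False
      then have "1 \<le> exp (-b*x) * exp (b*t)" using assms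
        by (simp add: mult_left_mono flip: exp_add)
      then have "1 * std_normal_density t \<le> exp (-b*x) * exp (b*t) * std_normal_density t"
        by (intro mult_right_mono) auto
      then show ?thesis using False by (simp add: mult.assoc)
    qed auto
  qed
  also have "\<dots> = exp (-b*x) * exp (b\<^sup>2/2)"
    using integral_exp_normal[of "b"] by simp
  also have "\<dots> = exp (-b*x + b\<^sup>2/2)" by (simp only: exp_add)
  finally show ?thesis .
qed


definition Q :: "real \<Rightarrow> real" where
  "Q p = (if 0 < p \<and> p < 1 then Phi_inv p else 0)"

lemma Q_meas[measurable]: "Q \<in> borel_measurable borel"
proof (subst borel_measurable_iff_le, intro allI)
  fix t
  have "{p \<in> space borel. Q p \<le> t} = ({0<..<1} \<inter> {..Phi t}) \<union> (if 0 \<le> t then - {0<..<1} else {})"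
    by (auto simp: Q_def Phi_inv_le_iff)
  then show "{p \<in> space borel. Q p \<le> t} \<in> sets borel" by simp
qed

lemma Q_tail:
  assumes p: "0 < p" "p < 1" and a: "a \<ge> 0" and e: "e > 0"
  shows "exp (a * \<bar>Q p\<bar>) \<le> exp (a\<^sup>2 / (2*e)) * (p powr (-e) + (1-p) powr (-e))"
proof -
  define q where "q = Q p"
  define b where "b = a / e"
  have b0: "b \<ge> 0" using a e by (simp add: b_def)
  have Pq: "Phi q = p" using p by (simp add: q_def Q_def Phi_inv)
  have ab: "e * b = a" using e by (simp add: b_def)
  have l1: "ln p \<le> b*q + b\<^sup>2/2" using Phi_le[OF b0, of q] Pq p
    by (metis ln_exp ln_le_cancel_iff exp_gt_zero)
  have l2: "ln (1-p) \<le> -b*q + b\<^sup>2/2" using Phi_ge[OF b0, of q] Pq p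
    by (metis ln_exp ln_le_cancel_iff exp_gt_zero diff_gt_0_iff_gt)
  have k: "a\<^sup>2/(2*e) = e * (b\<^sup>2/2)" using e by (simp add: b_def power2_eq_square field_simps)
  have A: "exp (-a*q) \<le> exp (a\<^sup>2/(2*e)) * p powr (-e)"
  proof -
    have "-a*q \<le> a\<^sup>2/(2*e) + (-e) * ln p"
      using mult_left_mono[OF l1, of e] e unfolding k by (simp add: algebra_simps ab[symmetric])
    then have "exp (-a*q) \<le> exp (a\<^sup>2/(2*e) + (-e) * ln p)" by simp
    also have "\<dots> = exp (a\<^sup>2/(2*e)) * exp ((-e) * ln p)" by (rule exp_add)
    also have "exp ((-e) * ln p) = p powr (-e)" using p by (simp add: powr_def)
    finally show ?thesis .
  qed
  have B: "exp (a*q) \<le> exp (a\<^sup>2/(2*e)) * (1-p) powr (-e)"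
  proof -
    have "a*q \<le> a\<^sup>2/(2*e) + (-e) * ln (1-p)"
      using mult_left_mono[OF l2, of e] e unfolding k by (simp add: algebra_simps ab[symmetric])
    then have "exp (a*q) \<le> exp (a\<^sup>2/(2*e) + (-e) * ln (1-p))" by simp
    also have "\<dots> = exp (a\<^sup>2/(2*e)) * exp ((-e) * ln (1-p))" by (rule exp_add)
    also have "exp ((-e) * ln (1-p)) = (1-p) powr (-e)" using p by (simp add: powr_def)
    finally show ?thesis .
  qed
  have "exp (a * \<bar>q\<bar>) \<le> exp (-a*q) + exp (a*q)"
    by (cases "q \<ge> 0") (auto simp: add_nonneg_pos add_pos_nonneg)
  also have "\<dots> \<le> exp (a\<^sup>2/(2*e)) * p powr (-e) + exp (a\<^sup>2/(2*e)) * (1-p) powr (-e)"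
    using A B by simp
  finally show ?thesis by (simp add: q_def distrib_left)
qed


definition dw :: "(real \<Rightarrow> real) \<Rightarrow> real \<Rightarrow> real" where
  "dw w p = indicator {0<..<1} p * deriv w (1 - p)"

context
  fixes w :: "real \<Rightarrow> real"
  assumes A: "assumption1 w"
begin

lemma w_cont: "continuous_on {0..1} w" using A unfolding assumption1_def by auto
lemma w_smono: "strict_mono_on {0..1} w" using A unfolding assumption1_def by auto
lemma w0: "w 0 = 0" using A unfolding assumption1_def by auto
lemma w1: "w 1 = 1" using A unfolding assumption1_def by auto
lemma w_diff: "p \<in> {0<..<1} \<Longrightarrow> (w has_real_derivative deriv w p) (at p)"
  using A unfolding assumption1_def by (auto simp: DERIV_deriv_iff_real_differentiable)
lemma w_dcont: "continuous_on {0<..<1} (deriv w)" using A unfolding assumption1_def by auto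

lemma w_mono: "0 \<le> x \<Longrightarrow> x \<le> y \<Longrightarrow> y \<le> 1 \<Longrightarrow> w x \<le> w y"
proof (cases "x = y")
  case False
  assume "0 \<le> x" "x \<le> y" "y \<le> 1"
  with False have "x < y" by simp
  then show ?thesis using strict_mono_onD[OF w_smono, of x y] \<open>0 \<le> x\<close> \<open>y \<le> 1\<close> \<open>x \<le> y\<close> by simp
qed simp

lemma wbar_cont: "continuous_on UNIV (wbar w)"
  unfolding wbar_def
  by (intro continuous_on_diff continuous_on_const continuous_on_compose2[OF w_cont])
     (auto intro!: continuous_intros)

lemma wbar_isCont: "isCont (wbar w) x"
  using wbar_cont by (simp add: continuous_on_eq_continuous_at)

lemma wbar_mono: "x \<le> y \<Longrightarrow> wbar w x \<le> wbar w y"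
  unfolding wbar_def by (intro diff_left_mono w_mono) auto

lemma wbar_low: "x \<le> 0 \<Longrightarrow> wbar w x = 0"
  unfolding wbar_def using w1 by simp

lemma wbar_high: "x \<ge> 1 \<Longrightarrow> wbar w x = 1"
  unfolding wbar_def using w0 by simp

lemma wbar_mid: "0 \<le> x \<Longrightarrow> x \<le> 1 \<Longrightarrow> wbar w x = 1 - w (1 - x)"
  unfolding wbar_def by simp

lemma wbar_deriv: assumes "p \<in> {0<..<1}" shows "(wbar w has_real_derivative deriv w (1 - p)) (at p)"
proof -
  have d1: "((\<lambda>x. 1 - x) has_real_derivative (-1)) (at p)"
    by (auto intro!: derivative_eq_intros)
  have "((\<lambda>x. w (1 - x)) has_real_derivative deriv w (1 - p) * (-1)) (at p)"
    by (rule DERIV_chain2[where f=w and g="\<lambda>x. 1 - x", OF _ d1]) (use assms w_diff in auto)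
  then have "((\<lambda>x. 1 - w (1 - x)) has_real_derivative 0 - deriv w (1 - p) * (-1)) (at p)"
    by (intro DERIV_diff DERIV_const)
  then have "((\<lambda>x. 1 - w (1 - x)) has_real_derivative deriv w (1 - p)) (at p)" by simp
  then show ?thesis
    by (rule has_field_derivative_transform_within_open[of _ _ _ "{0<..<1}"])
       (use assms in \<open>auto simp: wbar_mid\<close>)
qed

lemma deriv_nonneg: assumes "p \<in> {0<..<1}" shows "deriv w p \<ge> 0"
proof (rule ccontr)
  assume "\<not> deriv w p \<ge> 0"
  then have "deriv w p < 0" by simp
  from DERIV_neg_dec_right[OF w_diff[OF assms] this] obtain d where d: "d > 0"
    "\<forall>h>0. h < d \<longrightarrow> w (p + h) < w p" by auto
  define h where "h = min (d/2) ((1 - p)/2)"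
  have "h > 0" "h < d" using d assms by (auto simp: h_def)
  then have "w (p + h) < w p" using d by auto
  moreover have "h \<le> (1 - p)/2" unfolding h_def by (rule min.cobounded2)
  then have "w p \<le> w (p + h)" using assms \<open>h > 0\<close> by (intro w_mono) auto
  ultimately show False by simp
qed

lemma dcont: assumes "p \<in> {0<..<1}" shows "isCont (\<lambda>x. deriv w (1 - x)) p"
proof -
  have "isCont (deriv w) (1 - p)"
    using w_dcont assms by (simp add: continuous_on_eq_continuous_at)
  moreover have "isCont (\<lambda>x. 1 - x) p" by simp
  ultimately show ?thesis using isCont_o2[of p "\<lambda>x. 1 - x" "deriv w"] by simp
qed

lemma dw_meas[measurable]: "dw w \<in> borel_measurable borel"
proof -
  have "continuous_on {0<..<1} (\<lambda>x. deriv w (1 - x))"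
    using dcont by (simp add: continuous_at_imp_continuous_on)
  from borel_measurable_continuous_on_indicator[OF _ this]
  show ?thesis unfolding dw_def by simp
qed

lemma dw_nonneg: "dw w p \<ge> 0"
  unfolding dw_def using deriv_nonneg[of "1-p"] by (auto simp: indicator_def)

lemma FTC_w: assumes "0 < x" "x \<le> 1"
  shows "set_integrable lborel {0<..<x} (\<lambda>p. deriv w (1 - p))"
    and "(LBINT p=0..x. deriv w (1 - p)) = wbar w x"
proof -
  have c: "((wbar w \<circ> real_of_ereal) \<longlongrightarrow> wbar w 0) (at_right (ereal 0))"
    unfolding ereal_tendsto_simps1 using wbar_isCont[of 0]
    by (simp add: isCont_def filterlim_at_split)
  have c2: "((wbar w \<circ> real_of_ereal) \<longlongrightarrow> wbar w x) (at_left (ereal x))"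
    unfolding ereal_tendsto_simps1 using wbar_isCont[of x]
    by (simp add: isCont_def filterlim_at_split)
  have *: "ereal 0 < ereal x" using assms by simp
  note F = interval_integral_FTC_nonneg[OF *, of "wbar w" "\<lambda>p. deriv w (1 - p)" "wbar w 0" "wbar w x"]
  have h1: "\<And>t. ereal 0 < ereal t \<Longrightarrow> ereal t < ereal x \<Longrightarrow> (wbar w has_real_derivative deriv w (1 - t)) (at t)"
    using assms by (intro wbar_deriv) auto
  have h2: "\<And>t. ereal 0 < ereal t \<Longrightarrow> ereal t < ereal x \<Longrightarrow> isCont (\<lambda>p. deriv w (1 - p)) t"
    using assms by (intro dcont) auto
  have h3: "AE t in lborel. ereal 0 < ereal t \<longrightarrow> ereal t < ereal x \<longrightarrow> 0 \<le> deriv w (1 - t)"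
    using assms by (intro AE_I2 impI deriv_nonneg) auto
  from F[OF h1 h2 h3 c c2] show "set_integrable lborel {0<..<x} (\<lambda>p. deriv w (1 - p))"
    "(LBINT p=0..x. deriv w (1 - p)) = wbar w x"
    by (auto simp: wbar_low zero_ereal_def)
qed

end


context
  fixes w :: "real \<Rightarrow> real"
  assumes A: "assumption1 w"
begin

lemma dwm[measurable]: "dw w \<in> borel_measurable borel" by (rule dw_meas[OF A])

lemma D_Iic_mid: assumes "0 < x" "x \<le> 1"
  shows "(\<integral>\<^sup>+p. ennreal (dw w p) * indicator {..x} p \<partial>lborel) = ennreal (wbar w x)"
proof -
  have "(\<integral>\<^sup>+p. ennreal (dw w p) * indicator {..x} p \<partial>lborel)
      = (\<integral>\<^sup>+p. ennreal (indicator {0<..<x} p * deriv w (1 - p)) \<partial>lborel)"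
  proof (rule nn_integral_cong_AE)
    show "AE p in lborel. ennreal (dw w p) * indicator {..x} p = ennreal (indicator {0<..<x} p * deriv w (1 - p))"
      using AE_lborel_singleton[of x]
    proof eventually_elim
      case (elim p)
      then show ?case using assms by (auto simp: dw_def indicator_def)
    qed
  qed
  also have "\<dots> = ennreal (\<integral>p. indicator {0<..<x} p * deriv w (1 - p) \<partial>lborel)"
  proof (rule nn_integral_eq_integral)
    show "integrable lborel (\<lambda>p. indicator {0<..<x} p * deriv w (1 - p))"
      using FTC_w[OF A assms] unfolding set_integrable_def by simp
    show "AE p in lborel. 0 \<le> indicator {0<..<x} p * deriv w (1 - p)"
      using deriv_nonneg[OF A] assms by (intro AE_I2) (auto simp: indicator_def)
  qed
  also have "(\<integral>p. indicator {0<..<x} p * deriv w (1 - p) \<partial>lborel) = (LBINT p=0..x. deriv w (1 - p))"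
    using assms unfolding interval_lebesgue_integral_def set_lebesgue_integral_def
    by (simp add: zero_ereal_def)
  also have "\<dots> = wbar w x" using FTC_w[OF A assms] by simp
  finally show ?thesis .
qed

lemma D_Iic: "(\<integral>\<^sup>+p. ennreal (dw w p) * indicator {..x} p \<partial>lborel) = ennreal (wbar w x)"
proof (cases "x \<le> 0")
  case True
  then have "(\<integral>\<^sup>+p. ennreal (dw w p) * indicator {..x} p \<partial>lborel) = (\<integral>\<^sup>+(p::real). 0 \<partial>lborel)"
    by (intro nn_integral_cong) (auto simp: dw_def indicator_def)
  then show ?thesis using True wbar_low[OF A] by simp
next
  case False
  show ?thesis
  proof (cases "x \<le> 1")
    case True then show ?thesis using False D_Iic_mid by simp
  next
    case F2: False
    have "(\<integral>\<^sup>+p. ennreal (dw w p) * indicator {..x} p \<partial>lborel) = (\<integral>\<^sup>+p. ennreal (dw w p) * indicator {..1} p \<partial>lborel)"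
      using F2 by (intro nn_integral_cong) (auto simp: dw_def indicator_def)
    then show ?thesis using D_Iic_mid[of 1] wbar_high[OF A, of x] wbar_high[OF A, of 1] F2 by simp
  qed
qed

lemma D_UNIV: "(\<integral>\<^sup>+p. ennreal (dw w p) \<partial>lborel) = 1"
proof -
  have "(\<integral>\<^sup>+p. ennreal (dw w p) \<partial>lborel) = (\<integral>\<^sup>+p. ennreal (dw w p) * indicator {..1} p \<partial>lborel)"
    by (intro nn_integral_cong) (auto simp: dw_def indicator_def)
  then show ?thesis using D_Iic[of 1] wbar_high[OF A, of 1] by simp
qed

lemma D_rd: "real_distribution (density lborel (dw w))"
proof -
  have "prob_space (density lborel (dw w))"
    by (rule prob_spaceI) (simp add: emeasure_density D_UNIV)
  then show ?thesis unfolding real_distribution_def real_distribution_axioms_def by simp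
qed

lemma N_rd: "real_distribution (interval_measure (wbar w))"
proof (rule real_distribution_interval_measure)
  show "\<And>x y. x \<le> y \<Longrightarrow> wbar w x \<le> wbar w y" by (rule wbar_mono[OF A])
  show "\<And>a. continuous (at_right a) (wbar w)"
    using wbar_isCont[OF A] by (simp add: continuous_at_split)
  show "(wbar w \<longlongrightarrow> 0) at_bot"
    by (rule tendsto_eventually) (auto simp: eventually_at_bot_linorder intro!: exI[of _ 0] wbar_low[OF A])
  show "(wbar w \<longlongrightarrow> 1) at_top"
    by (rule tendsto_eventually) (auto simp: eventually_at_top_linorder intro!: exI[of _ 1] wbar_high[OF A])
qed

lemma N_eq: "interval_measure (wbar w) = density lborel (dw w)"
proof (rule cdf_unique[OF N_rd D_rd])
  have "cdf (interval_measure (wbar w)) = wbar w"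
  proof (rule cdf_interval_measure)
    show "\<And>x y. x \<le> y \<Longrightarrow> wbar w x \<le> wbar w y" by (rule wbar_mono[OF A])
    show "\<And>a. continuous (at_right a) (wbar w)"
      using wbar_isCont[OF A] by (simp add: continuous_at_split)
    show "(wbar w \<longlongrightarrow> 0) at_bot"
      by (rule tendsto_eventually) (auto simp: eventually_at_bot_linorder intro!: exI[of _ 0] wbar_low[OF A])
  qed
  moreover have "cdf (density lborel (dw w)) = wbar w"
  proof
    fix x
    have "emeasure (density lborel (dw w)) {..x} = ennreal (wbar w x)"
      by (simp add: emeasure_density D_Iic)
    moreover have "wbar w x \<ge> 0" using wbar_mono[OF A, of 0 x] wbar_low[OF A, of 0] wbar_low[OF A, of x]
      by (cases "x \<ge> 0") auto
    ultimately show "cdf (density lborel (dw w)) x = wbar w x"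
      unfolding cdf_def by (simp add: measure_def)
  qed
  ultimately show "cdf (interval_measure (wbar w)) = cdf (density lborel (dw w))" by simp
qed

end


lemma cross_ineq:
  fixes x y a e :: real
  assumes "0 < x" "0 < y" "a \<le> 0" "e \<ge> 0"
  shows "x powr a * y powr (-e) \<le> x powr (a - e) + y powr (a - e)"
proof (cases "x \<le> y")
  case True
  have "y powr (-e) \<le> x powr (-e)" using True assms by (intro powr_mono2') auto
  then have "x powr a * y powr (-e) \<le> x powr a * x powr (-e)" by (intro mult_left_mono) auto
  also have "\<dots> = x powr (a - e)" by (simp add: powr_add[symmetric])
  moreover have "0 \<le> y powr (a - e)" by simp
  ultimately show ?thesis by linarith
next
  case False
  have "x powr a \<le> y powr a" using False assms by (intro powr_mono2') auto
  then have "x powr a * y powr (-e) \<le> y powr a * y powr (-e)" by (intro mult_right_mono) auto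
  also have "\<dots> = y powr (a - e)" by (simp add: powr_add[symmetric])
  moreover have "0 \<le> x powr (a - e)" by simp
  ultimately show ?thesis by linarith
qed

lemma aux4:
  fixes p1 q1 r1 t1 u1 v1 :: real
  assumes "p1*r1 = u1" "q1*t1 = v1" "p1*t1 \<le> u1+v1" "q1*r1 \<le> u1+v1" "0 \<le> u1" "0 \<le> v1"
  shows "(p1+q1)*(r1+t1) \<le> 4*(u1+v1)"
proof -
  have "(p1+q1)*(r1+t1) = u1 + p1*t1 + q1*r1 + v1" using assms by (simp add: algebra_simps)
  also have "\<dots> \<le> u1 + (u1+v1) + (u1+v1) + v1" using assms by (intro add_mono) auto
  also have "\<dots> \<le> 4*(u1+v1)" using assms by simp
  finally show ?thesis .
qed

lemma prod_ineq:
  fixes x y a e :: real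
  assumes "0 < x" "0 < y" "a \<le> 0" "e \<ge> 0"
  shows "(x powr a + y powr a) * (x powr (-e) + y powr (-e)) \<le> 4 * (x powr (a - e) + y powr (a - e))"
proof -
  have "x powr a * x powr (-e) = x powr (a - e)" "y powr a * y powr (-e) = y powr (a - e)"
    by (simp_all add: powr_add[symmetric])
  moreover have "x powr a * y powr (-e) \<le> x powr (a - e) + y powr (a - e)"
    "y powr a * x powr (-e) \<le> x powr (a - e) + y powr (a - e)"
    using cross_ineq[OF assms] cross_ineq[of y x a e] assms by auto
  moreover have "0 \<le> x powr (a - e)" "0 \<le> y powr (a - e)" by auto
  ultimately show ?thesis by (intro aux4) auto
qed

context
  fixes w :: "real \<Rightarrow> real"
  assumes A: "assumption1 w"
begin

lemma int_exp_lborel: assumes a: "a \<ge> 0"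
  shows "integrable lborel (\<lambda>p. dw w p * (indicator {0<..<1} p * exp (a * \<bar>Q p\<bar>)))"
proof -
  obtain c \<alpha> where c: "c > 0" "-1 < \<alpha>" "\<alpha> < 0"
    and dc: "\<And>p. p \<in> {0<..<1} \<Longrightarrow> deriv w p \<le> c * (p powr \<alpha> + (1 - p) powr \<alpha>)"
    using A unfolding assumption1_def by blast
  define e where "e = (1 + \<alpha>) / 2"
  define \<beta> where "\<beta> = \<alpha> - e"
  have e: "e > 0" using c by (simp add: e_def)
  have b: "\<beta> + 1 > 0" using c unfolding \<beta>_def e_def by (simp add: field_simps)
  define E where "E = exp (a\<^sup>2 / (2*e))"
  define K where "K = 4 * c * E"
  have I1: "set_integrable lborel {0..1} (\<lambda>t. t powr ((\<beta> + 1) - 1) * (1 - t) powr (1 - 1))"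
    using b by (intro integrable_Beta) auto
  have I2: "set_integrable lborel {0..1} (\<lambda>t. t powr (1 - 1) * (1 - t) powr ((\<beta> + 1) - 1))"
    using b by (intro integrable_Beta) auto
  define g where "g = (\<lambda>t. indicator {0..1} t * (t powr ((\<beta> + 1) - 1) * (1 - t) powr (1 - 1))
      + indicator {0..1} t * (t powr (1 - 1) * (1 - t) powr ((\<beta> + 1) - 1)))"
  have gi: "integrable lborel (\<lambda>t. K * g t)"
    unfolding g_def using I1 I2 unfolding set_integrable_def
    by (intro integrable_mult_right Bochner_Integration.integrable_add) auto
  show ?thesis
  proof (rule Bochner_Integration.integrable_bound[OF gi])
    show "(\<lambda>p. dw w p * (indicator {0<..<1} p * exp (a * \<bar>Q p\<bar>))) \<in> borel_measurable lborel"
      using dwm[OF A] by measurable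
    show "AE p in lborel. norm (dw w p * (indicator {0<..<1} p * exp (a * \<bar>Q p\<bar>))) \<le> norm (K * g p)"
    proof (intro AE_I2)
      fix p :: real
      show "norm (dw w p * (indicator {0<..<1} p * exp (a * \<bar>Q p\<bar>))) \<le> norm (K * g p)"
      proof (cases "p \<in> {0<..<1}")
        case False
        then show ?thesis by (simp add: dw_def)
      next
        case True
        then have p: "0 < p" "p < 1" by auto
        have gp: "g p = p powr \<beta> + (1 - p) powr \<beta>" using p by (simp add: g_def)
        have d0: "0 \<le> dw w p" by (rule dw_nonneg[OF A])
        have d1: "dw w p \<le> c * (p powr \<alpha> + (1 - p) powr \<alpha>)"
          using dc[of "1 - p"] p by (simp add: dw_def add.commute)
        have t: "exp (a * \<bar>Q p\<bar>) \<le> E * (p powr (-e) + (1-p) powr (-e))"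
          unfolding E_def using Q_tail[OF p a e] .
        have "dw w p * exp (a * \<bar>Q p\<bar>) \<le> (c * (p powr \<alpha> + (1 - p) powr \<alpha>)) * (E * (p powr (-e) + (1-p) powr (-e)))"
          using d0 d1 t by (intro mult_mono) auto
        also have "\<dots> = c * E * ((p powr \<alpha> + (1 - p) powr \<alpha>) * (p powr (-e) + (1-p) powr (-e)))"
          by (simp add: algebra_simps)
        also have "\<dots> \<le> c * E * (4 * (p powr \<beta> + (1 - p) powr \<beta>))"
          unfolding \<beta>_def using p c e by (intro mult_left_mono prod_ineq) (auto simp: E_def)
        also have "\<dots> = K * g p" by (simp add: K_def gp)
        finally have "dw w p * exp (a * \<bar>Q p\<bar>) \<le> K * g p" .
        moreover have "0 \<le> dw w p * exp (a * \<bar>Q p\<bar>)" using d0 by simp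
        ultimately show ?thesis using True by simp
      qed
    qed
  qed
qed

definition NN where "NN = interval_measure (wbar w)"

lemma int_exp_N: assumes a: "a \<ge> 0"
  shows "integrable NN (\<lambda>p. indicator {0<..<1} p * exp (a * \<bar>Q p\<bar>))"
proof -
  have "integrable (density lborel (dw w)) (\<lambda>p. indicator {0<..<1} p * exp (a * \<bar>Q p\<bar>))"
    using int_exp_lborel[OF a] dwm[OF A] dw_nonneg[OF A]
    by (subst integrable_density) auto
  then show ?thesis unfolding NN_def N_eq[OF A] .
qed

end


lemma exp_sums_real: "(\<lambda>n. (y::real)^n / fact n) sums exp y"
  using exp_converges[of y] by (simp add: divide_inverse mult.commute)

lemma exp_partial_le: "(\<Sum>n<N. \<bar>y::real\<bar>^n / fact n) \<le> exp \<bar>y\<bar>"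
proof -
  have "(\<Sum>n<N. \<bar>y\<bar>^n / fact n) \<le> (\<Sum>n. \<bar>y\<bar>^n / fact n)"
    using exp_sums_real[of "\<bar>y\<bar>"] by (intro sum_le_suminf) (auto simp: sums_iff)
  then show ?thesis using exp_sums_real[of "\<bar>y\<bar>"] by (simp add: sums_iff)
qed

lemma pow_fact_le: "\<bar>(y::real)^n / fact n\<bar> \<le> exp \<bar>y\<bar>"
proof -
  have "\<bar>y^n / fact n\<bar> = \<bar>y\<bar>^n / fact n" by (simp add: power_abs)
  also have "\<dots> = (\<Sum>k\<in>{n}. \<bar>y\<bar>^k / fact k)" by simp
  also have "\<dots> \<le> (\<Sum>k<Suc n. \<bar>y\<bar>^k / fact k)" by (intro sum_mono2) auto
  also have "\<dots> \<le> exp \<bar>y\<bar>" by (rule exp_partial_le)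
  finally show ?thesis .
qed

definition mom :: "(real \<Rightarrow> real) \<Rightarrow> nat \<Rightarrow> real" where
  "mom w n = (\<integral>p. indicator {0<..<1} p * Q p ^ n \<partial>NN w)"

definition cc :: "(real \<Rightarrow> real) \<Rightarrow> nat \<Rightarrow> real" where
  "cc w n = (-1)^n / fact n * mom w n"

context
  fixes w :: "real \<Rightarrow> real"
  assumes A: "assumption1 w"
begin

lemma NN_sets[simp, measurable_cong]: "sets (NN w) = sets borel" by (simp add: NN_def[OF A])
lemma NN_space[simp]: "space (NN w) = UNIV" by (simp add: NN_def[OF A])

lemma hfun_eq: "hfun w x = (\<integral>p. indicator {0<..<1} p * exp (- x * Q p) \<partial>NN w)"
  unfolding hfun_def set_lebesgue_integral_def NN_def[OF A]
  by (intro Bochner_Integration.integral_cong) (auto simp: Q_def indicator_def)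

lemma hfun_sums: "(\<lambda>n. cc w n * x^n) sums hfun w x"
proof -
  define u where "u = (\<lambda>n p. indicator {0<..<1} p * ((- x * Q p)^n / fact n))"
  have um[measurable]: "u n \<in> borel_measurable borel" for n unfolding u_def by measurable
  have ub: "\<bar>u n p\<bar> \<le> indicator {0<..<1} p * exp (\<bar>x\<bar> * \<bar>Q p\<bar>)" for n p
    using pow_fact_le[of "- x * Q p" n] unfolding u_def by (auto simp: indicator_def abs_mult)
  have ie: "integrable (NN w) (\<lambda>p. indicator {0<..<1} p * exp (\<bar>x\<bar> * \<bar>Q p\<bar>))"
    by (rule int_exp_N[OF A]) simp
  have ui: "integrable (NN w) (u n)" for n
    by (rule Bochner_Integration.integrable_bound[OF ie]) (auto intro!: AE_I2 simp: ub)
  have s1: "AE p in NN w. summable (\<lambda>n. norm (u n p))"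
  proof (intro AE_I2)
    fix p
    have "summable (\<lambda>n. \<bar>- x * Q p\<bar>^n / fact n)" using exp_sums_real by (simp add: sums_iff)
    then have "summable (\<lambda>n. indicator {0<..<1} p * (\<bar>- x * Q p\<bar>^n / fact n))"
      by (rule summable_mult)
    then show "summable (\<lambda>n. norm (u n p))"
      unfolding u_def by (simp add: abs_mult power_abs)
  qed
  have s2: "summable (\<lambda>n. \<integral>p. norm (u n p) \<partial>NN w)"
  proof (rule summableI_nonneg_bounded)
    show "0 \<le> (\<integral>p. norm (u n p) \<partial>NN w)" for n by simp
    fix N
    have "(\<Sum>n<N. \<integral>p. norm (u n p) \<partial>NN w) = (\<integral>p. (\<Sum>n<N. norm (u n p)) \<partial>NN w)"
      by (rule Bochner_Integration.integral_sum[symmetric]) (auto intro!: integrable_norm ui)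
    also have "\<dots> \<le> (\<integral>p. indicator {0<..<1} p * exp (\<bar>x\<bar> * \<bar>Q p\<bar>) \<partial>NN w)"
    proof (rule integral_mono)
      show "integrable (NN w) (\<lambda>p. \<Sum>n<N. norm (u n p))" using ui by auto
      show "integrable (NN w) (\<lambda>p. indicator {0<..<1} p * exp (\<bar>x\<bar> * \<bar>Q p\<bar>))" by (rule ie)
      fix p
      have "(\<Sum>n<N. norm (u n p)) = indicator {0<..<1} p * (\<Sum>n<N. \<bar>- x * Q p\<bar>^n / fact n)"
        unfolding u_def by (simp add: sum_distrib_left abs_mult power_abs)
      also have "\<dots> \<le> indicator {0<..<1} p * exp \<bar>- x * Q p\<bar>"
        by (intro mult_left_mono exp_partial_le) auto
      finally show "(\<Sum>n<N. norm (u n p)) \<le> indicator {0<..<1} p * exp (\<bar>x\<bar> * \<bar>Q p\<bar>)"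
        by (simp add: abs_mult)
    qed
    finally show "(\<Sum>n<N. \<integral>p. norm (u n p) \<partial>NN w) \<le> (\<integral>p. indicator {0<..<1} p * exp (\<bar>x\<bar> * \<bar>Q p\<bar>) \<partial>NN w)" .
  qed
  have S: "(\<lambda>n. integral\<^sup>L (NN w) (u n)) sums (\<integral>p. (\<Sum>n. u n p) \<partial>NN w)"
    by (rule sums_integral[OF ui s1 s2])
  have su: "(\<Sum>n. u n p) = indicator {0<..<1} p * exp (- x * Q p)" for p
  proof -
    have "(\<lambda>n. indicator {0<..<1} p * ((- x * Q p)^n / fact n)) sums (indicator {0<..<1} p * exp (- x * Q p))"
      by (intro sums_mult exp_sums_real)
    then show ?thesis unfolding u_def by (simp add: sums_iff)
  qed
  have iu: "integral\<^sup>L (NN w) (u n) = cc w n * x^n" for n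
  proof -
    have e: "(- x * Q p)^n = (-1)^n * x^n * Q p^n" for p
    proof -
      have "- x * Q p = (-1) * x * Q p" by simp
      then show ?thesis by (simp only: power_mult_distrib)
    qed
    have "u n = (\<lambda>p. ((-1)^n / fact n * x^n) * (indicator {0<..<1} p * Q p ^ n))"
      unfolding u_def e by (auto simp: fun_eq_iff)
    then show ?thesis unfolding cc_def mom_def by simp
  qed
  show ?thesis using S unfolding su iu hfun_eq[symmetric] .
qed

lemma cc_summable: "summable (\<lambda>n. cc w n * x^n)"
  using hfun_sums by (simp add: sums_iff)

lemma hfun_suminf: "hfun w = (\<lambda>x. \<Sum>n. cc w n * x^n)"
  using hfun_sums by (auto simp: sums_iff fun_eq_iff)

definition "h1 = (\<lambda>x. \<Sum>n. diffs (cc w) n * x^n)"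
definition "h2 = (\<lambda>x. \<Sum>n. diffs (diffs (cc w)) n * x^n)"

lemma h_deriv: "(hfun w has_real_derivative h1 x) (at x)"
  unfolding hfun_suminf h1_def by (rule termdiffs_strong_converges_everywhere) (rule cc_summable)

lemma h1_deriv: "(h1 has_real_derivative h2 x) (at x)"
  unfolding h1_def h2_def
  by (rule termdiffs_strong_converges_everywhere) (rule termdiff_converges_all, rule cc_summable)

lemma deriv_h: "deriv (hfun w) = h1"
  using h_deriv DERIV_imp_deriv by blast

lemma h_cont: "isCont (hfun w) x"
  using h_deriv DERIV_isCont by blast

lemma h1_cont: "isCont h1 x"
  using h1_deriv DERIV_isCont by blast

lemma hfun_pos: "hfun w x > 0"
proof -
  define f where "f = (\<lambda>p. indicator {0<..<1} p * exp (- x * Q p))"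
  have fm[measurable]: "f \<in> borel_measurable borel" unfolding f_def by measurable
  have fi: "integrable (NN w) f"
  proof (rule Bochner_Integration.integrable_bound[OF int_exp_N[OF A, of "\<bar>x\<bar>"]])
    show "f \<in> borel_measurable (NN w)" by simp
    have le: "- x * Q p \<le> \<bar>x\<bar> * \<bar>Q p\<bar>" for p
    proof -
      have "- x * Q p \<le> \<bar>x * Q p\<bar>" by simp
      then show ?thesis by (simp add: abs_mult)
    qed
    show "AE p in NN w. norm (f p) \<le> norm (indicator {0<..<1} p * exp (\<bar>x\<bar> * \<bar>Q p\<bar>))"
      using le by (intro AE_I2) (auto simp: f_def indicator_def)
  qed simp
  have nn: "AE p in NN w. 0 \<le> f p" by (intro AE_I2) (simp add: f_def)
  have ge: "hfun w x \<ge> 0" unfolding hfun_eq f_def[symmetric] using nn by (intro integral_nonneg_AE)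
  have "hfun w x \<noteq> 0"
  proof
    assume "hfun w x = 0"
    then have "AE p in NN w. f p = 0" using integral_nonneg_eq_0_iff_AE[OF fi nn]
      unfolding hfun_eq f_def by simp
    moreover have "{p \<in> space (NN w). \<not> f p = 0} = {0<..<1}"
      by (auto simp: f_def indicator_def)
    ultimately have "emeasure (NN w) {0<..<1} = 0"
      using AE_iff_measurable[of "{0<..<1}" "NN w" "\<lambda>p. f p = 0"] by simp
    moreover have "emeasure (NN w) {0<..1/2} \<le> emeasure (NN w) {0<..<1}"
      by (intro emeasure_mono) auto
    moreover have "emeasure (NN w) {0<..1/2} = wbar w (1/2) - wbar w 0"
      unfolding NN_def[OF A] using wbar_mono[OF A] wbar_isCont[OF A]
      by (intro emeasure_interval_measure_Ioc) (auto simp: continuous_at_split)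
    moreover have "wbar w (1/2) - wbar w 0 > 0"
    proof -
      have "w (1/2) < w 1" using strict_mono_onD[OF w_smono[OF A], of "1/2" 1] by simp
      then show ?thesis using w1[OF A] wbar_mid[OF A, of "1/2"] wbar_low[OF A, of 0] by simp
    qed
    ultimately show False by (simp add: ennreal_le_iff2)
  qed
  with ge show ?thesis by simp
qed

end


definition kk :: "(real \<Rightarrow> real) \<Rightarrow> real \<Rightarrow> real" where
  "kk w u = (if u = 0 then h2 w 0 else h1 w u / u)"

definition bc :: "(real \<Rightarrow> real) \<Rightarrow> real \<Rightarrow> real \<Rightarrow> real" where
  "bc w \<gamma> y = 1 - \<gamma> * kk w (- \<gamma> * sqrt y) / hfun w (- \<gamma> * sqrt y)"

context
  fixes w :: "real \<Rightarrow> real"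
  assumes A: "assumption1 w"
begin

lemma bracket_eq: "bracket w \<gamma> y = 1 + h1 w (- \<gamma> * sqrt y) / (hfun w (- \<gamma> * sqrt y) * sqrt y)"
  unfolding bracket_def deriv_h[OF A] ..

lemma comp_cont:
  assumes "\<And>u. isCont f u"
  shows "isCont (\<lambda>y. f (- \<gamma> * sqrt y)) y"
  by (rule isCont_o2[OF _ assms]) (intro continuous_intros)

lemma bracket_cont: assumes "y > 0" shows "isCont (bracket w \<gamma>) y"
proof -
  have "isCont (\<lambda>y. 1 + h1 w (- \<gamma> * sqrt y) / (hfun w (- \<gamma> * sqrt y) * sqrt y)) y"
    using assms hfun_pos[OF A] comp_cont[of "h1 w"] comp_cont[of "hfun w"] h1_cont[OF A] h_cont[OF A]
    by (intro continuous_intros) (auto simp: less_imp_neq[symmetric])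
  then show ?thesis unfolding bracket_eq[abs_def] .
qed

context
  assumes h10: "h1 w 0 = 0"
begin

lemma kk_cont: "isCont (kk w) u"
proof (cases "u = 0")
  case True
  have d: "((\<lambda>v. (h1 w (0 + v) - h1 w 0) / v) \<longlongrightarrow> h2 w 0) (at 0)"
    using h1_deriv[OF A, of 0] unfolding DERIV_def .
  have "eventually (\<lambda>v. (h1 w (0 + v) - h1 w 0) / v = kk w v) (at 0)"
    by (simp add: eventually_at_filter kk_def h10)
  from Lim_transform_eventually[OF d this] show ?thesis
    unfolding isCont_def True by (simp add: kk_def[abs_def])
next
  case False
  have c: "isCont (\<lambda>v. h1 w v / v) u" using False h1_cont[OF A] by (intro continuous_intros) auto
  have "eventually (\<lambda>v. v \<noteq> 0) (nhds u)"
    using False by (intro tendsto_imp_eventually_ne) (auto intro: filterlim_ident)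
  then have "eventually (\<lambda>v. h1 w v / v = kk w v) (nhds u)"
    by eventually_elim (simp add: kk_def)
  then have "eventually (\<lambda>v. h1 w v / v = kk w v) (at u)"
    by (simp add: eventually_at_filter eventually_mono)
  from Lim_transform_eventually[OF c[unfolded isCont_def] this] show ?thesis
    unfolding isCont_def using False by (simp add: kk_def[abs_def])
qed

lemma bc_cont: "isCont (bc w \<gamma>) y"
proof -
  have "isCont (\<lambda>y. 1 - \<gamma> * kk w (- \<gamma> * sqrt y) / hfun w (- \<gamma> * sqrt y)) y"
    using hfun_pos[OF A] comp_cont[of "kk w"] comp_cont[of "hfun w"] kk_cont h_cont[OF A]
    by (intro continuous_intros) (auto simp: less_imp_neq[symmetric])
  then show ?thesis unfolding bc_def[abs_def] .
qed

lemma bc_eq: assumes "y > 0" shows "bracket w \<gamma> y = bc w \<gamma> y"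
proof (cases "\<gamma> = 0")
  case True then show ?thesis by (simp add: bracket_eq bc_def h10)
next
  case False
  define u where "u = - \<gamma> * sqrt y"
  have s: "sqrt y > 0" using assms by simp
  have u0: "u \<noteq> 0" using False s by (simp add: u_def)
  have H: "hfun w u > 0" by (rule hfun_pos[OF A])
  have "h1 w u / (hfun w u * sqrt y) = - \<gamma> * (h1 w u / u) / hfun w u"
    using u0 s H False by (simp add: u_def field_simps)
  then show ?thesis unfolding bracket_eq bc_def u_def[symmetric] using u0 by (simp add: kk_def)
qed

end

lemma bracket_big:
  assumes h10: "h1 w 0 \<noteq> 0"
  shows "\<exists>d>0. \<exists>k>0. \<forall>y. 0 < y \<longrightarrow> y < d \<longrightarrow> k \<le> y * (bracket w \<gamma> y)\<^sup>2"
proof -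
  define P where "P = (\<lambda>y. sqrt y + h1 w (- \<gamma> * sqrt y) / hfun w (- \<gamma> * sqrt y))"
  have Pc: "isCont P 0"
    unfolding P_def
    using hfun_pos[OF A] comp_cont[of "h1 w"] comp_cont[of "hfun w"] h1_cont[OF A] h_cont[OF A]
    by (intro continuous_intros) (auto simp: less_imp_neq[symmetric])
  have P0: "P 0 \<noteq> 0" using h10 hfun_pos[OF A, of 0] by (simp add: P_def)
  have "((\<lambda>y. \<bar>P y\<bar>) \<longlongrightarrow> \<bar>P 0\<bar>) (at 0)"
    using Pc unfolding isCont_def by (intro tendsto_intros)
  moreover have "\<bar>P 0\<bar> / 2 < \<bar>P 0\<bar>" using P0 by simp
  ultimately have "eventually (\<lambda>y. \<bar>P 0\<bar> / 2 < \<bar>P y\<bar>) (at 0)"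
    by (rule order_tendstoD)
  then obtain d where d: "d > 0" "\<And>y. y \<noteq> 0 \<Longrightarrow> dist y 0 < d \<Longrightarrow> \<bar>P 0\<bar> / 2 < \<bar>P y\<bar>"
    unfolding eventually_at by auto
  have "\<forall>y. 0 < y \<longrightarrow> y < d \<longrightarrow> (\<bar>P 0\<bar> / 2)\<^sup>2 \<le> y * (bracket w \<gamma> y)\<^sup>2"
  proof (intro allI impI)
    fix y :: real assume y: "0 < y" "y < d"
    have s: "sqrt y > 0" using y by simp
    have "bracket w \<gamma> y * sqrt y = P y"
      using s hfun_pos[OF A, of "- \<gamma> * sqrt y"] unfolding bracket_eq P_def
      by (simp add: field_simps)
    then have e: "y * (bracket w \<gamma> y)\<^sup>2 = (P y)\<^sup>2"
      using y by (metis power_mult_distrib real_sqrt_pow2 less_imp_le mult.commute)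
    have "\<bar>P 0\<bar> / 2 < \<bar>P y\<bar>" using d y by auto
    then have "(\<bar>P 0\<bar> / 2)\<^sup>2 \<le> \<bar>P y\<bar>\<^sup>2" by (intro power_mono) auto
    then show "(\<bar>P 0\<bar> / 2)\<^sup>2 \<le> y * (bracket w \<gamma> y)\<^sup>2" unfolding e by simp
  qed
  moreover have "(\<bar>P 0\<bar> / 2)\<^sup>2 > 0" using P0 by simp
  ultimately show ?thesis using d(1) by blast
qed

end


definition Gr :: "(real \<Rightarrow> real) \<Rightarrow> real \<Rightarrow> real \<Rightarrow> real" where
  "Gr w \<gamma> y = integral {0..y} (\<lambda>z. (bc w \<gamma> z)\<^sup>2)"

context
  fixes w :: "real \<Rightarrow> real" and \<gamma> :: real
  assumes A: "assumption1 w" and h10: "h1 w 0 = 0"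
begin

lemma bc2_cont: "continuous_on S (\<lambda>z. (bc w \<gamma> z)\<^sup>2)"
proof (rule continuous_at_imp_continuous_on, intro ballI)
  fix x
  show "isCont (\<lambda>z. (bc w \<gamma> z)\<^sup>2) x" using bc_cont[OF A h10, of x] by (rule isCont_power)
qed

lemma Gr_fun: "Gr w \<gamma> = (\<lambda>y. integral {0..y} (\<lambda>z. (bc w \<gamma> z)\<^sup>2))"
  by (simp add: fun_eq_iff Gr_def)

lemma Gr_deriv: assumes "y > 0" shows "(Gr w \<gamma> has_real_derivative (bc w \<gamma> y)\<^sup>2) (at y)"
proof -
  have "(Gr w \<gamma> has_real_derivative (bc w \<gamma> y)\<^sup>2) (at y within {0..y+1})"
    unfolding Gr_fun by (rule integral_has_real_derivative[OF bc2_cont]) (use assms in simp)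
  then have "(Gr w \<gamma> has_real_derivative (bc w \<gamma> y)\<^sup>2) (at y within {0<..<y+1})"
    by (rule has_field_derivative_subset) auto
  moreover have "at y within {0<..<y+1} = at y" using assms by (intro at_within_open) auto
  ultimately show ?thesis by simp
qed

lemma Gr_cont: "continuous_on {0..K} (Gr w \<gamma>)"
  unfolding Gr_fun by (rule indefinite_integral_continuous_1[OF integrable_continuous_interval[OF bc2_cont]])

lemma Gr_0: "Gr w \<gamma> 0 = 0" by (simp add: Gr_def)

lemma Gr_mono: assumes "0 \<le> u" "u \<le> v" shows "Gr w \<gamma> u \<le> Gr w \<gamma> v"
proof (rule DERIV_nonneg_imp_increasing_open[OF assms(2)])
  show "continuous_on {u..v} (Gr w \<gamma>)" by (rule continuous_on_subset[OF Gr_cont[of v]]) (use assms in auto)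
  fix x assume "u < x" "x < v"
  then show "\<exists>y. (Gr w \<gamma> has_real_derivative y) (at x) \<and> 0 \<le> y"
    using Gr_deriv[of x] assms by auto
qed

lemma Gr_nonneg: "0 \<le> y \<Longrightarrow> 0 \<le> Gr w \<gamma> y" using Gr_mono[of 0 y] Gr_0 by simp

lemma Gfun_eq: assumes "0 \<le> y" shows "Gfun w \<gamma> (ereal y) = ennreal (Gr w \<gamma> y)"
proof -
  have "Gfun w \<gamma> (ereal y) = (\<integral>\<^sup>+z. ennreal ((bc w \<gamma> z)\<^sup>2) * indicator {0..y} z \<partial>lborel)"
    unfolding Gfun_def
  proof (rule nn_integral_cong_AE)
    show "AE z in lborel. indicator {z. 0 \<le> z \<and> ereal z \<le> ereal y} z * ennreal ((bracket w \<gamma> z)\<^sup>2)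
        = ennreal ((bc w \<gamma> z)\<^sup>2) * indicator {0..y} z"
      using AE_lborel_singleton[of 0]
    proof eventually_elim
      case (elim z)
      show ?case
      proof (cases "0 \<le> z \<and> z \<le> y")
        case True then have "z > 0" using elim by auto
        then show ?thesis using True bc_eq[OF A h10] by (simp add: indicator_def)
      qed (auto simp: indicator_def)
    qed
  qed
  also have "\<dots> = ennreal (Gr w \<gamma> y)"
    unfolding Gr_def
    by (intro nn_integral_has_integral_lebesgue' integrable_integral integrable_continuous_interval bc2_cont) auto
  finally show ?thesis .
qed

lemma Gfun_inf: "Gfun w \<gamma> \<infinity> = (SUP n. ennreal (Gr w \<gamma> (real n)))"
proof -
  have bm: "(\<lambda>z. (bc w \<gamma> z)\<^sup>2) \<in> borel_measurable borel"
    by (intro borel_measurable_continuous_onI bc2_cont)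
  have "Gfun w \<gamma> \<infinity> = (\<integral>\<^sup>+z. (SUP n. ennreal ((bc w \<gamma> z)\<^sup>2) * indicator {0..real n} z) \<partial>lborel)"
    unfolding Gfun_def
  proof (rule nn_integral_cong_AE)
    show "AE z in lborel. indicator {z. 0 \<le> z \<and> ereal z \<le> \<infinity>} z * ennreal ((bracket w \<gamma> z)\<^sup>2)
        = (SUP n. ennreal ((bc w \<gamma> z)\<^sup>2) * indicator {0..real n} z)"
      using AE_lborel_singleton[of 0]
    proof eventually_elim
      case (elim z)
      show ?case
      proof (cases "0 \<le> z")
        case True
        then have "z > 0" using elim by auto
        have "(SUP n. ennreal ((bc w \<gamma> z)\<^sup>2) * indicator {0..real n} z) = ennreal ((bc w \<gamma> z)\<^sup>2)"
        proof (rule antisym)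
          show "(SUP n. ennreal ((bc w \<gamma> z)\<^sup>2) * indicator {0..real n} z) \<le> ennreal ((bc w \<gamma> z)\<^sup>2)"
            by (intro SUP_least) (auto simp: indicator_def)
          obtain n where "z \<le> real n" using real_arch_simple by blast
          then have "ennreal ((bc w \<gamma> z)\<^sup>2) = ennreal ((bc w \<gamma> z)\<^sup>2) * indicator {0..real n} z"
            using True by (simp add: indicator_def)
          also have "\<dots> \<le> (SUP n. ennreal ((bc w \<gamma> z)\<^sup>2) * indicator {0..real n} z)"
            by (rule SUP_upper) simp
          finally show "ennreal ((bc w \<gamma> z)\<^sup>2) \<le> (SUP n. ennreal ((bc w \<gamma> z)\<^sup>2) * indicator {0..real n} z)" .
        qed
        then show ?thesis using True \<open>z > 0\<close> bc_eq[OF A h10] by (simp add: indicator_def)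
      qed (auto simp: indicator_def)
    qed
  qed
  also have "\<dots> = (SUP n. (\<integral>\<^sup>+z. ennreal ((bc w \<gamma> z)\<^sup>2) * indicator {0..real n} z \<partial>lborel))"
  proof (rule nn_integral_monotone_convergence_SUP)
    show "incseq (\<lambda>n z. ennreal ((bc w \<gamma> z)\<^sup>2) * indicator {0..real n} z)"
      by (auto simp: incseq_def le_fun_def indicator_def intro!: mult_left_mono)
    show "(\<lambda>z. ennreal ((bc w \<gamma> z)\<^sup>2) * indicator {0..real n} z) \<in> borel_measurable lborel" for n
      using bm by measurable
  qed
  also have "\<dots> = (SUP n. ennreal (Gr w \<gamma> (real n)))"
  proof (rule SUP_cong[OF refl])
    fix n :: nat
    show "(\<integral>\<^sup>+z. ennreal ((bc w \<gamma> z)\<^sup>2) * indicator {0..real n} z \<partial>lborel) = ennreal (Gr w \<gamma> (real n))"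
      unfolding Gr_def
      by (intro nn_integral_has_integral_lebesgue' integrable_integral integrable_continuous_interval bc2_cont) auto
  qed
  finally show ?thesis .
qed

end

lemma y1_nonneg: "y1 w \<gamma> \<ge> 0"
  unfolding y1_def by (rule Inf_greatest) auto

lemma y1_below: "0 < y \<Longrightarrow> ereal y < y1 w \<gamma> \<Longrightarrow> bracket w \<gamma> y > 0"
proof (rule ccontr)
  assume "0 < y" "ereal y < y1 w \<gamma>" "\<not> bracket w \<gamma> y > 0"
  then have "y1 w \<gamma> \<le> ereal y" unfolding y1_def by (intro Inf_lower) auto
  with \<open>ereal y < y1 w \<gamma>\<close> show False by simp
qed


context
  fixes w :: "real \<Rightarrow> real" and \<gamma> :: real
  assumes A: "assumption1 w" and h10: "h1 w 0 = 0"
begin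

lemma part2:
  fixes T \<theta> :: real
  assumes T: "T > 0" and th: "\<theta> \<noteq> 0" and G: "Gfun w \<gamma> (y1 w \<gamma>) > ennreal (\<theta>\<^sup>2 * T)"
  shows "pos_sol w \<gamma> \<theta> T (\<lambda>t. Ginv w \<gamma> (\<theta>\<^sup>2 * (T - t)))
       \<and> (\<forall>Z. pos_sol w \<gamma> \<theta> T Z \<longrightarrow> (\<forall>t\<in>{0..T}. Z t = Ginv w \<gamma> (\<theta>\<^sup>2 * (T - t))))
       \<and> (\<forall>t\<in>{0..<T}. bracket w \<gamma> (Ginv w \<gamma> (\<theta>\<^sup>2 * (T - t))) > 0)"
proof -
  define c where "c = \<theta>\<^sup>2 * T"
  have th2: "\<theta>\<^sup>2 > 0" using th by simp
  have c0: "c > 0" using th2 T by (simp add: c_def)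
  note Gr_deriv = Gr_deriv[where \<gamma>=\<gamma>, OF A h10] and Gr_cont = Gr_cont[where \<gamma>=\<gamma>, OF A h10]
    and Gr_0 = Gr_0[where \<gamma>=\<gamma>, OF A h10]
    and Gr_mono = Gr_mono[where \<gamma>=\<gamma>, OF A h10] and Gr_nonneg = Gr_nonneg[where \<gamma>=\<gamma>, OF A h10]
    and Gfun_eq = Gfun_eq[where \<gamma>=\<gamma>, OF A h10] and bc_eq = bc_eq[where \<gamma>=\<gamma>, OF A h10]
  define y1' where "y1' = y1 w \<gamma>"
  have y1n: "y1' \<ge> 0" unfolding y1'_def by (rule y1_nonneg)
  obtain Ys where Ys: "Ys > 0" "ereal Ys \<le> y1'" "Gr w \<gamma> Ys > c"
    and fin: "\<And>r. y1' = ereal r \<Longrightarrow> Gr w \<gamma> r > c"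
  proof (cases y1' rule: ereal_cases)
    case (real r)
    then have r0: "r \<ge> 0" using y1n by simp
    have "ennreal (Gr w \<gamma> r) > ennreal c" using G Gfun_eq[OF r0] real by (simp add: c_def y1'_def)
    then have rc: "Gr w \<gamma> r > c" using c0 by (simp add: ennreal_less_iff)
    have "r \<noteq> 0" using rc Gr_0 c0 by auto
    then show ?thesis using that[of r] r0 rc real by simp
  next
    case PInf
    have "ennreal c < (SUP n. ennreal (Gr w \<gamma> (real n)))"
      using G Gfun_inf[OF A h10] PInf by (simp add: c_def y1'_def)
    then obtain n where n: "ennreal c < ennreal (Gr w \<gamma> (real n))" by (auto simp: less_SUP_iff)
    then have nc: "Gr w \<gamma> (real n) > c" using c0 by (simp add: ennreal_less_iff)
    have "real n \<noteq> 0" using nc Gr_0 c0 by (cases n) auto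
    then have "real n > 0" by simp
    then show ?thesis using that[of "real n"] nc PInf by simp
  next
    case MInf then show ?thesis using y1n by simp
  qed
  have strict: "Gr w \<gamma> u < Gr w \<gamma> v" if "0 \<le> u" "u < v" "ereal v \<le> y1'" for u v
  proof (rule DERIV_pos_imp_increasing_open[OF that(2)])
    show "continuous_on {u..v} (Gr w \<gamma>)" by (rule continuous_on_subset[OF Gr_cont[of v]]) (use that in auto)
    fix x assume x: "u < x" "x < v"
    have "x > 0" using that x by auto
    have "ereal x < ereal v" using x by simp
    then have "ereal x < y1 w \<gamma>" using that(3) unfolding y1'_def by (rule less_le_trans)
    then have "bracket w \<gamma> x > 0" by (rule y1_below[OF \<open>x > 0\<close>])
    then have "bc w \<gamma> x > 0" using bc_eq[OF \<open>x > 0\<close>] by simp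
    then show "\<exists>y. (Gr w \<gamma> has_real_derivative y) (at x) \<and> 0 < y"
      using Gr_deriv[OF \<open>x > 0\<close>] by (intro exI[of _ "(bc w \<gamma> x)\<^sup>2"] conjI) auto
  qed
  define S where "S = (\<lambda>y. 0 \<le> y \<and> ereal y \<le> y1')"
  have uniq: "u = v" if "S u" "S v" "Gr w \<gamma> u = Gr w \<gamma> v" for u v
    using strict[of u v] strict[of v u] that unfolding S_def by (cases u v rule: linorder_cases) auto
  have Ginv_char: "S (Ginv w \<gamma> x) \<and> Gr w \<gamma> (Ginv w \<gamma> x) = x \<and> Ginv w \<gamma> x \<le> Ys"
    if x0: "0 \<le> x" and x1: "x \<le> Gr w \<gamma> Ys" for x
  proof -
    obtain y where y: "0 \<le> y" "y \<le> Ys" "Gr w \<gamma> y = x"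
      using IVT'[of "Gr w \<gamma>" 0 x Ys] x0 x1 Gr_0 Ys(1) Gr_cont[of Ys] by auto
    have Sy: "S y" using y Ys(2) unfolding S_def by (meson ereal_less_eq(3) order_trans)
    have "Ginv w \<gamma> x = y" unfolding Ginv_def
    proof (rule the_equality)
      show "0 \<le> y \<and> ereal y \<le> y1 w \<gamma> \<and> Gfun w \<gamma> (ereal y) = ennreal x"
        using Sy y Gfun_eq[of y] unfolding S_def y1'_def by simp
      fix y' assume "0 \<le> y' \<and> ereal y' \<le> y1 w \<gamma> \<and> Gfun w \<gamma> (ereal y') = ennreal x"
      then have Sy': "S y'" and e: "ennreal (Gr w \<gamma> y') = ennreal x"
        using Gfun_eq[of y'] unfolding S_def y1'_def by auto
      then have "Gr w \<gamma> y' = x" using Gr_nonneg[of y'] x0 Sy' unfolding S_def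
        by (simp add: ennreal_inj)
      then show "y' = y" using uniq[OF Sy' Sy] y by simp
    qed
    then show ?thesis using Sy y by simp
  qed
  have Ginv_Gr: "Ginv w \<gamma> (Gr w \<gamma> y) = y" if "0 \<le> y" "y \<le> Ys" for y
  proof -
    have "0 \<le> Gr w \<gamma> y" "Gr w \<gamma> y \<le> Gr w \<gamma> Ys" using that Gr_nonneg Gr_mono by auto
    from Ginv_char[OF this] have "S (Ginv w \<gamma> (Gr w \<gamma> y))" "Gr w \<gamma> (Ginv w \<gamma> (Gr w \<gamma> y)) = Gr w \<gamma> y"
      by auto
    moreover have "S y" using that Ys(2) unfolding S_def by (meson ereal_less_eq(3) order_trans)
    ultimately show ?thesis using uniq by blast
  qed
  have cG: "continuous_on {0..Gr w \<gamma> Ys} (Ginv w \<gamma>)"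
  proof -
    have "continuous_on (Gr w \<gamma> ` {0..Ys}) (Ginv w \<gamma>)"
      by (rule continuous_on_inv[OF Gr_cont compact_Icc]) (auto simp: Ginv_Gr)
    moreover have "{0..Gr w \<gamma> Ys} \<subseteq> Gr w \<gamma> ` {0..Ys}"
    proof
      fix x assume "x \<in> {0..Gr w \<gamma> Ys}"
      then have "Ginv w \<gamma> x \<in> {0..Ys}" "Gr w \<gamma> (Ginv w \<gamma> x) = x"
        using Ginv_char[of x] unfolding S_def by auto
      then show "x \<in> Gr w \<gamma> ` {0..Ys}" by (metis image_eqI)
    qed
    ultimately show ?thesis by (rule continuous_on_subset)
  qed
  define Y where "Y = (\<lambda>t. Ginv w \<gamma> (\<theta>\<^sup>2 * (T - t)))"
  have Yinfo: "0 < Y t \<and> Y t < Ys \<and> bracket w \<gamma> (Y t) > 0 \<and> bracket w \<gamma> (Y t) = bc w \<gamma> (Y t)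
      \<and> Gr w \<gamma> (Y t) = \<theta>\<^sup>2 * (T - t)" if t: "0 \<le> t" "t < T" for t
  proof -
    define x where "x = \<theta>\<^sup>2 * (T - t)"
    have x0: "0 < x" using th2 t by (simp add: x_def)
    have xc: "x \<le> c" using th2 t by (simp add: x_def c_def mult_left_mono)
    have ch: "S (Y t)" "Gr w \<gamma> (Y t) = x" "Y t \<le> Ys"
      using Ginv_char[of x] x0 xc Ys(3) by (auto simp: Y_def x_def)
    have p: "Y t > 0" using ch Gr_0 x0 unfolding S_def by (cases "Y t = 0") auto
    have l: "Y t < Ys" using ch xc Ys(3) by (cases "Y t = Ys") auto
    have "ereal (Y t) < ereal Ys" using l by simp
    then have "ereal (Y t) < y1 w \<gamma>" using Ys(2) unfolding y1'_def by (rule less_le_trans)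
    then have b: "bracket w \<gamma> (Y t) > 0" by (rule y1_below[OF p])
    show ?thesis using p l b bc_eq[OF p] ch(2) by (simp add: x_def)
  qed
  have YT: "Y T = 0" using Ginv_Gr[of 0] Ys Gr_0 by (simp add: Y_def)
  have Ycont: "continuous_on {0..T} Y"
    unfolding Y_def
  proof (rule continuous_on_compose2[OF cG])
    show "continuous_on {0..T} (\<lambda>t. \<theta>\<^sup>2 * (T - t))" by (intro continuous_intros)
    show "(\<lambda>t. \<theta>\<^sup>2 * (T - t)) ` {0..T} \<subseteq> {0..Gr w \<gamma> Ys}"
    proof
      fix x assume "x \<in> (\<lambda>t. \<theta>\<^sup>2 * (T - t)) ` {0..T}"
      then obtain t where t: "t \<in> {0..T}" "x = \<theta>\<^sup>2 * (T - t)" by auto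
      have "x \<le> c" using th2 t by (simp add: c_def mult_left_mono)
      moreover have "0 \<le> x" using th2 t by simp
      ultimately show "x \<in> {0..Gr w \<gamma> Ys}" using Ys(3) by simp
    qed
  qed
  have Yder: "(Y has_real_derivative (- \<theta>\<^sup>2 * (bracket w \<gamma> (Y t)) powi (-2))) (at t)"
    if t: "0 \<le> t" "t < T" for t
  proof -
    define x where "x = \<theta>\<^sup>2 * (T - t)"
    have x0: "0 < x" using th2 t by (simp add: x_def)
    have "x \<le> c" using th2 t by (simp add: x_def c_def mult_left_mono)
    then have xc: "x < Gr w \<gamma> Ys" using Ys(3) by simp
    note yi = Yinfo[OF t]
    have Yx: "Y t = Ginv w \<gamma> x" by (simp add: Y_def x_def)
    have bne: "(bc w \<gamma> (Ginv w \<gamma> x))\<^sup>2 \<noteq> 0" using yi Yx by simp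
    have d1: "(Ginv w \<gamma> has_real_derivative inverse ((bc w \<gamma> (Ginv w \<gamma> x))\<^sup>2)) (at x)"
    proof (rule DERIV_inverse_function[where f="Gr w \<gamma>" and a=0 and b="Gr w \<gamma> Ys"])
      show "(Gr w \<gamma> has_real_derivative (bc w \<gamma> (Ginv w \<gamma> x))\<^sup>2) (at (Ginv w \<gamma> x))"
        using Gr_deriv[of "Ginv w \<gamma> x"] yi Yx by simp
      show "(bc w \<gamma> (Ginv w \<gamma> x))\<^sup>2 \<noteq> 0" by (rule bne)
      show "0 < x" "x < Gr w \<gamma> Ys" using x0 xc by auto
      show "Gr w \<gamma> (Ginv w \<gamma> z) = z" if "0 < z" "z < Gr w \<gamma> Ys" for z
        using Ginv_char[of z] that by simp
      show "isCont (Ginv w \<gamma>) x"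
        using continuous_on_interior[OF cG, of x] x0 xc by simp
    qed
    have d2: "((\<lambda>t. \<theta>\<^sup>2 * (T - t)) has_real_derivative (- \<theta>\<^sup>2)) (at t)"
      by (auto intro!: derivative_eq_intros)
    have D: "((\<lambda>t. Ginv w \<gamma> (\<theta>\<^sup>2 * (T - t))) has_real_derivative inverse ((bc w \<gamma> (Ginv w \<gamma> x))\<^sup>2) * (- \<theta>\<^sup>2)) (at t)"
      using DERIV_chain2[OF d1[unfolded x_def] d2] by (simp add: x_def)
    have E: "inverse ((bc w \<gamma> (Ginv w \<gamma> x))\<^sup>2) * (- \<theta>\<^sup>2) = - \<theta>\<^sup>2 * (bracket w \<gamma> (Y t)) powi (-2)"
      using yi Yx by (simp add: power_int_minus)
    show ?thesis unfolding Y_def using D unfolding E Y_def .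
  qed
  have P1: "pos_sol w \<gamma> \<theta> T Y"
    unfolding pos_sol_def
  proof (intro conjI ballI Ycont YT)
    fix t assume "t \<in> {0..<T}"
    then have t: "0 \<le> t" "t < T" by auto
    show "Y t > 0" "bracket w \<gamma> (Y t) \<noteq> 0" using Yinfo[OF t] by auto
    show "(Y has_real_derivative (- \<theta>\<^sup>2 * (bracket w \<gamma> (Y t)) powi (-2))) (at t within {0..T})"
      using Yder[OF t] by (rule has_field_derivative_at_within)
  qed
  have P2: "\<forall>t\<in>{0..T}. Z t = Y t" if Z: "pos_sol w \<gamma> \<theta> T Z" for Z
  proof
    fix t assume t: "t \<in> {0..T}"
    have cZ: "continuous_on {0..T} Z" and ZT: "Z T = 0"
      and Zp: "\<And>s. s \<in> {0..<T} \<Longrightarrow> Z s > 0 \<and> bracket w \<gamma> (Z s) \<noteq> 0 \<and>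
        (Z has_real_derivative (- \<theta>\<^sup>2 * (bracket w \<gamma> (Z s)) powi (-2))) (at s within {0..T})"
      using Z unfolding pos_sol_def by auto
    have Znn: "0 \<le> Z s" if "s \<in> {0..T}" for s
      using Zp[of s] ZT that by (cases "s = T") auto
    have "compact (Z ` {0..T})" by (rule compact_continuous_image[OF cZ compact_Icc])
    then have "bounded (Z ` {0..T})" by (rule compact_imp_bounded)
    then obtain K where K0: "\<forall>x\<in>Z ` {0..T}. \<bar>x\<bar> \<le> K" unfolding bounded_real by auto
    have K: "\<bar>Z s\<bar> \<le> K" if "s \<in> {0..T}" for s using K0 that by auto
    define \<phi> where "\<phi> = (\<lambda>s. Gr w \<gamma> (Z s) + \<theta>\<^sup>2 * s)"
    have c1: "continuous_on {0..T} (\<lambda>s. Gr w \<gamma> (Z s))"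
    proof (rule continuous_on_compose2[OF Gr_cont[of K] cZ])
      show "Z ` {0..T} \<subseteq> {0..K}"
      proof
        fix x assume "x \<in> Z ` {0..T}"
        then obtain s where "s \<in> {0..T}" "x = Z s" by auto
        then show "x \<in> {0..K}" using K[of s] Znn[of s] by auto
      qed
    qed
    have cphi: "continuous_on {0..T} \<phi>"
      unfolding \<phi>_def by (intro continuous_on_add c1 continuous_intros)
    have dphi: "(\<phi> has_real_derivative 0) (at s)" if s: "0 < s" "s < T" for s
    proof -
      have zs: "Z s > 0" "bracket w \<gamma> (Z s) \<noteq> 0"
        and dz: "(Z has_real_derivative (- \<theta>\<^sup>2 * (bracket w \<gamma> (Z s)) powi (-2))) (at s within {0..T})"
        using Zp[of s] s by auto
      have "(Z has_real_derivative (- \<theta>\<^sup>2 * (bracket w \<gamma> (Z s)) powi (-2))) (at s within {0<..<T})"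
        by (rule has_field_derivative_subset[OF dz]) auto
      moreover have "at s within {0<..<T} = at s" using s by (intro at_within_open) auto
      ultimately have dz': "(Z has_real_derivative (- \<theta>\<^sup>2 * (bracket w \<gamma> (Z s)) powi (-2))) (at s)" by simp
      have "((\<lambda>s. Gr w \<gamma> (Z s)) has_real_derivative (bc w \<gamma> (Z s))\<^sup>2 * (- \<theta>\<^sup>2 * (bracket w \<gamma> (Z s)) powi (-2))) (at s)"
        by (rule DERIV_chain2[OF Gr_deriv[OF zs(1)] dz'])
      moreover have "((\<lambda>s. \<theta>\<^sup>2 * s) has_real_derivative \<theta>\<^sup>2) (at s)"
        by (auto intro!: derivative_eq_intros)
      ultimately have D: "(\<phi> has_real_derivative (bc w \<gamma> (Z s))\<^sup>2 * (- \<theta>\<^sup>2 * (bracket w \<gamma> (Z s)) powi (-2)) + \<theta>\<^sup>2) (at s)"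
        unfolding \<phi>_def by (rule DERIV_add)
      have E: "(bc w \<gamma> (Z s))\<^sup>2 * (- \<theta>\<^sup>2 * (bracket w \<gamma> (Z s)) powi (-2)) + \<theta>\<^sup>2 = 0"
        using zs bc_eq[OF zs(1)] by (simp add: power_int_minus field_simps)
      show ?thesis using D unfolding E .
    qed
    have e1: "\<phi> t = \<phi> 0" using t by (intro DERIV_isconst2[OF T cphi dphi]) simp_all
    have e2: "\<phi> T = \<phi> 0" using T by (intro DERIV_isconst2[OF T cphi dphi]) simp_all
    have GZ: "Gr w \<gamma> (Z t) = \<theta>\<^sup>2 * (T - t)"
      using e1 e2 ZT Gr_0 unfolding \<phi>_def by (simp add: algebra_simps)
    have St: "S (Z t)"
      unfolding S_def
    proof
      show "0 \<le> Z t" using Znn t by simp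
      show "ereal (Z t) \<le> y1'"
      proof (rule ccontr)
        assume "\<not> ereal (Z t) \<le> y1'"
        then have lt: "y1' < ereal (Z t)" by simp
        then obtain r where r: "y1' = ereal r" using y1n by (cases y1') auto
        have "r \<ge> 0" using y1n r by simp
        have "r < Z t" using lt r by simp
        then have "Gr w \<gamma> r \<le> Gr w \<gamma> (Z t)" using Gr_mono \<open>r \<ge> 0\<close> by simp
        moreover have "Gr w \<gamma> r > c" by (rule fin[OF r])
        moreover have "\<theta>\<^sup>2 * (T - t) \<le> c" using t th2 by (simp add: c_def mult_left_mono)
        ultimately show False using GZ by simp
      qed
    qed
    have "\<theta>\<^sup>2 * (T - t) \<le> c" using t th2 by (simp add: c_def mult_left_mono)
    then have x: "0 \<le> \<theta>\<^sup>2 * (T - t)" "\<theta>\<^sup>2 * (T - t) \<le> Gr w \<gamma> Ys"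
      using t th2 Ys(3) by auto
    have "S (Y t)" "Gr w \<gamma> (Y t) = \<theta>\<^sup>2 * (T - t)" using Ginv_char[OF x] by (auto simp: Y_def)
    then show "Z t = Y t" using uniq[OF St] GZ by simp
  qed
  have Q1: "pos_sol w \<gamma> \<theta> T (\<lambda>t. Ginv w \<gamma> (\<theta>\<^sup>2 * (T - t)))" using P1 unfolding Y_def .
  have Q2: "\<forall>Z. pos_sol w \<gamma> \<theta> T Z \<longrightarrow> (\<forall>t\<in>{0..T}. Z t = Ginv w \<gamma> (\<theta>\<^sup>2 * (T - t)))"
    using P2 unfolding Y_def by blast
  have Q3: "\<forall>t\<in>{0..<T}. bracket w \<gamma> (Ginv w \<gamma> (\<theta>\<^sup>2 * (T - t))) > 0"
  proof
    fix t assume "t \<in> {0..<T}"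
    then show "bracket w \<gamma> (Ginv w \<gamma> (\<theta>\<^sup>2 * (T - t))) > 0" using Yinfo[of t] unfolding Y_def by auto
  qed
  show ?thesis using Q1 Q2 Q3 by blast
qed

end


lemma der_interior:
  assumes "(Z has_real_derivative D) (at s within {0..T})" "0 < s" "s < T"
  shows "(Z has_real_derivative D) (at s)"
proof -
  have "(Z has_real_derivative D) (at s within {0<..<T})"
    by (rule has_field_derivative_subset[OF assms(1)]) auto
  moreover have "at s within {0<..<T} = at s" using assms by (intro at_within_open) auto
  ultimately show ?thesis by simp
qed

lemma part1a:
  assumes T: "T > 0" and Z: "pos_sol w \<gamma> 0 T Z"
  shows False
proof -
  have cZ: "continuous_on {0..T} Z" and ZT: "Z T = 0"
    and Zp: "\<And>s. s \<in> {0..<T} \<Longrightarrow> Z s > 0 \<and> bracket w \<gamma> (Z s) \<noteq> 0 \<and>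
      (Z has_real_derivative (- 0\<^sup>2 * (bracket w \<gamma> (Z s)) powi (-2))) (at s within {0..T})"
    using Z unfolding pos_sol_def by auto
  have d: "(Z has_real_derivative 0) (at s)" if "0 < s" "s < T" for s
    using der_interior[of Z _ s T] Zp[of s] that by simp
  have "Z T = Z 0" by (rule DERIV_isconst2[OF T cZ d]) (use T in simp_all)
  moreover have "Z 0 > 0" using Zp[of 0] T by simp
  ultimately show False using ZT by simp
qed

lemma part1b:
  assumes A: "assumption1 w" and h: "h1 w 0 \<noteq> 0" and T: "T > 0" and Z: "pos_sol w \<gamma> \<theta> T Z"
  shows False
proof -
  obtain d k where d: "d > 0" "k > 0" and dk: "\<And>y. 0 < y \<Longrightarrow> y < d \<Longrightarrow> k \<le> y * (bracket w \<gamma> y)\<^sup>2"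
    using bracket_big[OF A h, of \<gamma>] by blast
  have cZ: "continuous_on {0..T} Z" and ZT: "Z T = 0"
    and Zp: "\<And>s. s \<in> {0..<T} \<Longrightarrow> Z s > 0 \<and> bracket w \<gamma> (Z s) \<noteq> 0 \<and>
      (Z has_real_derivative (- \<theta>\<^sup>2 * (bracket w \<gamma> (Z s)) powi (-2))) (at s within {0..T})"
    using Z unfolding pos_sol_def by auto
  have "(Z \<longlongrightarrow> Z T) (at T within {0..T})"
    using cZ T by (simp add: continuous_on_def)
  then have "eventually (\<lambda>t. dist (Z t) (Z T) < d) (at T within {0..T})"
    using d(1) by (rule tendstoD)
  then obtain \<delta> where \<delta>: "\<delta> > 0" "\<And>t. t \<in> {0..T} \<Longrightarrow> t \<noteq> T \<Longrightarrow> dist t T < \<delta> \<Longrightarrow> dist (Z t) (Z T) < d"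
    unfolding eventually_at by blast
  define t0 where "t0 = max 0 (T - \<delta>/2)"
  have t0: "0 \<le> t0" "t0 < T" using T \<delta> by (auto simp: t0_def)
  have small: "Z t < d" if "t0 \<le> t" "t < T" for t
  proof -
    have "dist t T < \<delta>" using that \<delta>(1) by (auto simp: t0_def dist_real_def)
    then have "dist (Z t) (Z T) < d" using \<delta>(2)[of t] that t0 by auto
    then show ?thesis using ZT by (simp add: dist_real_def)
  qed
  define g where "g = (\<lambda>t. Z t * exp (\<theta>\<^sup>2 / k * t))"
  have cg: "continuous_on {t0..T} g"
    unfolding g_def
    by (intro continuous_intros continuous_on_subset[OF cZ]) (use t0 in auto)
  have dg: "\<exists>y. (g has_real_derivative y) (at t) \<and> 0 \<le> y" if t: "t0 < t" "t < T" for t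
  proof -
    have t': "t \<in> {0..<T}" using t t0 by auto
    define b where "b = bracket w \<gamma> (Z t)"
    have Zt: "Z t > 0" "b \<noteq> 0" using Zp[OF t'] by (auto simp: b_def)
    have dz: "(Z has_real_derivative (- \<theta>\<^sup>2 * b powi (-2))) (at t)"
      using der_interior[of Z _ t T] Zp[OF t'] t t0 by (simp add: b_def)
    have kb: "k \<le> Z t * b\<^sup>2" using dk[of "Z t"] Zt small[of t] t by (simp add: b_def)
    have b2: "b\<^sup>2 > 0" using Zt by simp
    have ib: "inverse (b\<^sup>2) \<le> Z t / k"
      using kb b2 d(2) by (simp add: field_simps)
    have de: "((\<lambda>t. exp (\<theta>\<^sup>2 / k * t)) has_real_derivative exp (\<theta>\<^sup>2 / k * t) * (\<theta>\<^sup>2 / k)) (at t)"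
      using d(2) by (auto intro!: derivative_eq_intros)
    have D: "(g has_real_derivative (- \<theta>\<^sup>2 * b powi (-2)) * exp (\<theta>\<^sup>2 / k * t) + exp (\<theta>\<^sup>2 / k * t) * (\<theta>\<^sup>2 / k) * Z t) (at t)"
      unfolding g_def by (rule DERIV_mult[OF dz de])
    have "(- \<theta>\<^sup>2 * b powi (-2)) * exp (\<theta>\<^sup>2 / k * t) + exp (\<theta>\<^sup>2 / k * t) * (\<theta>\<^sup>2 / k) * Z t
        = exp (\<theta>\<^sup>2 / k * t) * (\<theta>\<^sup>2 * (Z t / k - inverse (b\<^sup>2)))"
      by (simp add: power_int_minus algebra_simps)
    moreover have "0 \<le> exp (\<theta>\<^sup>2 / k * t) * (\<theta>\<^sup>2 * (Z t / k - inverse (b\<^sup>2)))"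
      using ib by (intro mult_nonneg_nonneg) auto
    ultimately show ?thesis using D by auto
  qed
  have "g t0 \<le> g T" by (rule DERIV_nonneg_imp_increasing_open[OF less_imp_le[OF t0(2)] dg cg]) auto
  moreover have "g T = 0" using ZT by (simp add: g_def)
  moreover have "g t0 > 0" using Zp[of t0] t0 by (simp add: g_def)
  ultimately show False by simp
qed

lemma theta_pos:
  fixes \<mu> :: "real^'n" and \<sigma> :: "real^'d^'n"
  assumes pd: "pos_def_mat (\<sigma> ** transpose \<sigma>)" and mu: "\<mu> \<noteq> 0"
  shows "theta \<mu> \<sigma> > 0"
proof -
  define S where "S = \<sigma> ** transpose \<sigma>"
  have ker: "\<forall>x. S *v x = 0 \<longrightarrow> x = 0"
  proof (intro allI impI)
    fix x assume "S *v x = 0"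
    then have "x \<bullet> (S *v x) = 0" by simp
    then show "x = 0" using pd unfolding pos_def_mat_def S_def by (metis less_irrefl)
  qed
  then obtain B where "B ** S = mat 1" using matrix_left_invertible_ker[of S] by blast
  then have inv: "invertible S" unfolding invertible_left_inverse by blast
  then have "\<exists>A'. S ** A' = mat 1 \<and> A' ** S = mat 1" unfolding invertible_def .
  then have SM: "S ** matrix_inv S = mat 1" unfolding matrix_inv_def by (rule someI_ex[THEN conjunct1])
  define y where "y = matrix_inv S *v \<mu>"
  have Sy: "S *v y = \<mu>" unfolding y_def by (simp add: matrix_vector_mul_assoc SM)
  have y0: "y \<noteq> 0" using Sy mu by auto
  have "\<mu> \<bullet> (matrix_inv S *v \<mu>) = y \<bullet> (S *v y)"
    unfolding y_def[symmetric] using Sy by (simp add: inner_commute)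
  also have "\<dots> > 0" using pd y0 unfolding pos_def_mat_def S_def by blast
  finally show ?thesis unfolding theta_def S_def by simp
qed

theorem propositionB1:
  fixes w :: "real \<Rightarrow> real" and \<gamma> T :: real
    and \<mu> :: "real^'n" and \<sigma> :: "real^'d^'n"
  assumes "assumption1 w"
    and "pos_def_mat (\<sigma> ** transpose \<sigma>)"
    and "T > 0"
  shows "((\<exists>Y. pos_sol w \<gamma> (theta \<mu> \<sigma>) T Y) \<longrightarrow> \<mu> \<noteq> 0 \<and> deriv (hfun w) 0 = 0)
    \<and> (\<mu> \<noteq> 0 \<and> deriv (hfun w) 0 = 0 \<and> Gfun w \<gamma> (y1 w \<gamma>) > ennreal ((theta \<mu> \<sigma>)\<^sup>2 * T) \<longrightarrow>
         pos_sol w \<gamma> (theta \<mu> \<sigma>) T (\<lambda>t. Ginv w \<gamma> ((theta \<mu> \<sigma>)\<^sup>2 * (T - t)))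
       \<and> (\<forall>Z. pos_sol w \<gamma> (theta \<mu> \<sigma>) T Z \<longrightarrow>
            (\<forall>t\<in>{0..T}. Z t = Ginv w \<gamma> ((theta \<mu> \<sigma>)\<^sup>2 * (T - t))))
       \<and> (\<forall>t\<in>{0..<T}. bracket w \<gamma> (Ginv w \<gamma> ((theta \<mu> \<sigma>)\<^sup>2 * (T - t))) > 0))"
proof (intro conjI impI)
  assume "\<exists>Y. pos_sol w \<gamma> (theta \<mu> \<sigma>) T Y"
  then obtain Y where Y: "pos_sol w \<gamma> (theta \<mu> \<sigma>) T Y" by blast
  show "\<mu> \<noteq> 0"
  proof
    assume "\<mu> = 0"
    then have "theta \<mu> \<sigma> = 0" by (simp add: theta_def)
    then show False using part1a[OF assms(3)] Y by simp
  qed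
  show "deriv (hfun w) 0 = 0"
  proof (rule ccontr)
    assume "deriv (hfun w) 0 \<noteq> 0"
    then have "h1 w 0 \<noteq> 0" using deriv_h[OF assms(1)] by simp
    then show False using part1b[OF assms(1) _ assms(3) Y] by simp
  qed
next
  assume H: "\<mu> \<noteq> 0 \<and> deriv (hfun w) 0 = 0 \<and> Gfun w \<gamma> (y1 w \<gamma>) > ennreal ((theta \<mu> \<sigma>)\<^sup>2 * T)"
  have h10: "h1 w 0 = 0" using H deriv_h[OF assms(1)] by simp
  have th: "theta \<mu> \<sigma> \<noteq> 0" using theta_pos[OF assms(2)] H by force
  note P = part2[OF assms(1) h10 assms(3) th, of \<gamma>] H
  show "pos_sol w \<gamma> (theta \<mu> \<sigma>) T (\<lambda>t. Ginv w \<gamma> ((theta \<mu> \<sigma>)\<^sup>2 * (T - t)))" using P by blast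
  show "\<forall>Z. pos_sol w \<gamma> (theta \<mu> \<sigma>) T Z \<longrightarrow> (\<forall>t\<in>{0..T}. Z t = Ginv w \<gamma> ((theta \<mu> \<sigma>)\<^sup>2 * (T - t)))"
    using P by blast
  show "\<forall>t\<in>{0..<T}. bracket w \<gamma> (Ginv w \<gamma> ((theta \<mu> \<sigma>)\<^sup>2 * (T - t))) > 0" using P by blast
qed


end
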